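(* Under all assumptions of the non-convex convergence theorem below, and with the specific choice $\beta_{1,t}=\beta_1/\sqrt{t}$ (where $\beta_1\in[0,1)$), the AGD iterates satisfy, for every integer $T\ge3$, $$\min_{t\in[T]}\mathbf{E}\big[\|\nabla f(\bm{w}_t)\|^2\big]<C_3\frac{1}{\sqrt{T}-\sqrt{2}}+C_4\frac{\log T}{\sqrt{T}-\sqrt{2}}+\frac{C_5\alpha}{1-\beta_1}\frac{\log T+1}{\sqrt{T}-\sqrt{2}},$$ with $$C_3=\frac{G_\infty}{\alpha(1-\beta_1)^2(1-\beta_2)^2}\Big(f(\bm{w}_1)-f(\bm{w}^* )+\frac{nG_\infty^2\alpha}{(1-\beta_1)^8\delta^2}(\delta+8L\alpha)+\frac{\alpha\beta_1 nG_\infty^2}{(1-\beta_1)^3\delta}\Big),$$ $$C_4=\frac{15LnG_\infty^3\alpha}{2(1-\beta_2)^2(1-\beta_1)^{10}\delta^2},\qquad C_5=\frac{nG_\infty^3}{\alpha(1-\beta_1)^5(1-\beta_2)^2\delta}.$$ The assumptions are: $f$ differentiable, lower bounded with optimal solution $\bm{w}^*$, $f(\bm{w}^* )>-\infty$, and $L$-smooth; $\|\bm{g}_t\|_\infty\le G_\infty$, $\|\nabla f(\bm{w}_t)\|_\infty\le G_\infty$ for $t\in[T]$ with $G_\infty\ge\delta$; $\bm{g}_t=\nabla f(\bm{w}_t)+\bm{\zeta}_t$ with $\mathbf{E}[\bm{\zeta}_t]=\bm{0}$ and mutually independent noises; $\alpha_t=\alpha/\sqrt{t}$ with $\alpha>0$,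 $\beta_2\in[0,1)$, and $b_{t,i}\le b_{t+1,i}$ for all $i\in[n]$ and all $t$.
   Context: AGD iteration (with time-varying first-moment parameter). Fix $n\ge1$, $\delta>0$, $\beta_2\in[0,1)$, a non-increasing sequence $(\beta_{1,t})_{t\ge1}$ with $0\le\beta_{1,t}\le\beta_1<1$, step sizes $\alpha_t>0$, and an initial point $\bm{w}_1\in\mathbb{R}^n$. Set $\bm{m}_0=\bm{0}$, $\bm{b}_0=\bm{0}$. For $t=1,2,\dots$, with $\bm{g}_t\in\mathbb{R}^n$ the (stochastic) gradient obtained at $\bm{w}_t$: $\bm{m}_t=\beta_{1,t}\bm{m}_{t-1}+(1-\beta_{1,t})\bm{g}_t$; $\bm{s}_1=\bm{m}_1/(1-\beta_{1,1})$ and $\bm{s}_t=\bm{m}_t/(1-\beta_{1,t}^t)-\bm{m}_{t-1}/(1-\beta_{1,t}^{t-1})$ for $t>1$; $\bm{b}_t=\beta_2\bm{b}_{t-1}+(1-\beta_2)\bm{s}_t^2$; $\bm{v}_t=\max(\sqrt{\bm{b}_t},\,\delta\sqrt{1-\beta_2^t})$; $\hat{\alpha}_t=\alpha_t\frac{\sqrt{1-\beta_2^t}}{1-\beta_{1,t}^t}$; $\bm{w}_{t+1}=\bm{w}_t-\hat{\alpha}_t\,\bm{m}_t/\bm{v}_t$. All vector operations (squares, square roots, max with a scalar or vector, division) are element-wise; $b_{t,i}$, $v_{t,i}$ denote the $i$-th coordinates. $[T]=\{1,\dots,T\}$. $\|\cdot\|$ is the Euclidean norm, $\|\cdot\|_\infty$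 the max norm. Expectations are over the randomness of the stochastic gradients. *)

theory Defs
  imports "HOL-Probability.Probability"
begin

definition linf :: "real ^ 'n \<Rightarrow> real" where
  "linf x = Max (range (\<lambda>i. \<bar>x $ i\<bar>))"

text \<open>State of the AGD iteration after k steps:
  agd_state ... k = (w_{k+1}, m_k, b_k).\<close>
fun agd_state ::
  "(real^'n \<Rightarrow> real^'n) \<Rightarrow> (nat \<Rightarrow> real) \<Rightarrow> real \<Rightarrow> real \<Rightarrow> (nat \<Rightarrow> real)
   \<Rightarrow> real^'n \<Rightarrow> (nat \<Rightarrow> real^'n) \<Rightarrow> nat \<Rightarrow> (real^'n) \<times> (real^'n) \<times> (real^'n)" where
  "agd_state grad b1s b2 \<delta> alphas w1 z 0 = (w1, 0, 0)"
| "agd_state grad b1s b2 \<delta> alphas w1 z (Suc k) =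
     (let (w, mp, bp) = agd_state grad b1s b2 \<delta> alphas w1 z k;
          t = Suc k;
          g = grad w + z t;
          m = b1s t *\<^sub>R mp + (1 - b1s t) *\<^sub>R g;
          s = (if t = 1 then (1 / (1 - b1s 1)) *\<^sub>R m
               else (1 / (1 - b1s t ^ t)) *\<^sub>R m - (1 / (1 - b1s t ^ (t - 1))) *\<^sub>R mp);
          b = (\<chi> i. b2 * (bp $ i) + (1 - b2) * (s $ i)\<^sup>2);
          v = (\<chi> i. max (sqrt (b $ i)) (\<delta> * sqrt (1 - b2 ^ t)));
          ah = alphas t * sqrt (1 - b2 ^ t) / (1 - b1s t ^ t);
          w' = w - ah *\<^sub>R (\<chi> i. (m $ i) / (v $ i))
      in (w', m, b))"

definition agd_w where
  "agd_w grad b1s b2 \<delta> alphas w1 z t = fst (agd_state grad b1s b2 \<delta> alphas w1 z (t - 1))"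

definition agd_g where
  "agd_g grad b1s b2 \<delta> alphas w1 z t = grad (agd_w grad b1s b2 \<delta> alphas w1 z t) + z t"

definition agd_b where
  "agd_b grad b1s b2 \<delta> alphas w1 z t = snd (snd (agd_state grad b1s b2 \<delta> alphas w1 z t))"

end

theory Submission
  imports Defs
begin


lemma descent:
  fixes f :: "'a::real_inner \<Rightarrow> real"
  assumes diff: "\<And>x. (f has_derivative (\<lambda>h. gr x \<bullet> h)) (at x)"
    and sm: "\<And>x y. norm (gr x - gr y) \<le> L * norm (x - y)"
  shows "f y \<le> f x + gr x \<bullet> (y - x) + L / 2 * (norm (y - x))\<^sup>2"
proof -
  define d where "d = y - x"
  define \<phi> where "\<phi> s = f (x + s *\<^sub>R d) - s * (gr x \<bullet> d) - L / 2 * s\<^sup>2 * (norm d)\<^sup>2" for s :: real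
  have der: "DERIV \<phi> s :> (gr (x + s *\<^sub>R d) \<bullet> d - gr x \<bullet> d - L * s * (norm d)\<^sup>2)" for s
  proof -
    have h1: "((\<lambda>s. x + s *\<^sub>R d) has_derivative (\<lambda>h. h *\<^sub>R d)) (at s)"
      by (auto intro!: derivative_eq_intros)
    have h2: "((\<lambda>s. f (x + s *\<^sub>R d)) has_derivative (\<lambda>h. gr (x + s *\<^sub>R d) \<bullet> (h *\<^sub>R d))) (at s)"
      using has_derivative_compose[OF h1 diff] by simp
    have h3: "((\<lambda>s. f (x + s *\<^sub>R d)) has_real_derivative (gr (x + s *\<^sub>R d) \<bullet> d)) (at s)"
      using h2 unfolding has_field_derivative_def by (simp add: mult.commute[of _ "gr (x + s *\<^sub>R d) \<bullet> d"])
    show ?thesis unfolding \<phi>_def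
      by (rule derivative_eq_intros h3 | simp)+
  qed
  have "\<phi> 1 \<le> \<phi> 0"
  proof (rule DERIV_nonpos_imp_nonincreasing[of 0 1])
    fix s :: real assume s: "0 \<le> s" "s \<le> 1"
    have "gr (x + s *\<^sub>R d) \<bullet> d - gr x \<bullet> d = (gr (x + s *\<^sub>R d) - gr x) \<bullet> d"
      by (simp add: inner_diff_left)
    also have "\<dots> \<le> norm (gr (x + s *\<^sub>R d) - gr x) * norm d" by (rule norm_cauchy_schwarz)
    also have "\<dots> \<le> L * norm (s *\<^sub>R d) * norm d"
      using sm[of "x + s *\<^sub>R d" x] by (simp add: mult_right_mono)
    also have "\<dots> = L * s * (norm d)\<^sup>2" using s by (simp add: power2_eq_square)
    finally show "\<exists>y. DERIV \<phi> s :> y \<and> y \<le> 0" using der[of s] by (intro exI[of _ "gr (x + s *\<^sub>R d) \<bullet> d - gr x \<bullet> d - L * s * (norm d)\<^sup>2"]) simp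
  qed simp
  then show ?thesis unfolding \<phi>_def d_def by (simp add: algebra_simps)
qed

lemma linf_comp: "\<bar>x $ i\<bar> \<le> linf x"
  unfolding linf_def by (rule Max_ge) auto

lemma norm2_vec: "(norm (x :: real ^ 'n))\<^sup>2 = (\<Sum>i\<in>UNIV. (x $ i)\<^sup>2)"
  unfolding power2_norm_eq_inner inner_vec_def by (simp add: power2_eq_square)

lemma harm_bound: "T \<ge> 1 \<Longrightarrow> (\<Sum>t=1..T. 1 / real t) \<le> ln (real T) + 1"
proof (induction T rule: dec_induct)
  case base then show ?case by simp
next
  case (step n)
  have n: "real n > 0" using step by simp
  have "ln (real n / real (Suc n)) \<le> real n / real (Suc n) - 1"
    by (rule ln_le_minus_one) (use n in simp)
  moreover have "ln (real n / real (Suc n)) = ln (real n) - ln (real (Suc n))"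
    using n by (simp add: ln_divide_pos)
  moreover have "real n / real (Suc n) - 1 = - (1 / real (Suc n))"
    using n by (simp add: field_simps)
  ultimately have "1 / real (Suc n) \<le> ln (real (Suc n)) - ln (real n)" by linarith
  then show ?case using step by simp
qed

locale agdp =
  fixes grad :: "real ^ 'n \<Rightarrow> real ^ 'n" and z :: "nat \<Rightarrow> real ^ 'n"
    and w1 :: "real ^ 'n" and \<delta> \<alpha> \<beta>1 \<beta>2 :: real
begin
definition "a t = \<beta>1 / sqrt (real t)"
definition "al t = \<alpha> / sqrt (real t)"
definition "st k = agd_state grad (\<lambda>t. \<beta>1 / sqrt (real t)) \<beta>2 \<delta> (\<lambda>t. \<alpha> / sqrt (real t)) w1 z k"
definition "W t = fst (st (t - 1))"
definition "Mm k = fst (snd (st k))"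
definition "Bb k = snd (snd (st k))"
definition "g t = grad (W t) + z t"
definition "S t = (if t = 1 then (1 / (1 - a 1)) *\<^sub>R Mm t
               else (1 / (1 - a t ^ t)) *\<^sub>R Mm t - (1 / (1 - a t ^ (t - 1))) *\<^sub>R Mm (t - 1))"
definition "V t = (\<chi> i. max (sqrt (Bb t $ i)) (\<delta> * sqrt (1 - \<beta>2 ^ t)))"
definition "ah t = al t * sqrt (1 - \<beta>2 ^ t) / (1 - a t ^ t)"
definition "U t = (if t = 1 then (\<chi> i. \<delta> * sqrt (1 - \<beta>2)) else V (t - 1))"
definition "Z t = (\<Sum>i\<in>UNIV. ah t * (1 - a t) * grad (W t) $ i * z t $ i / U t $ i)"

lemma step:
  "Mm (Suc k) = a (Suc k) *\<^sub>R Mm k + (1 - a (Suc k)) *\<^sub>R g (Suc k)"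
  "Bb (Suc k) = (\<chi> i. \<beta>2 * (Bb k $ i) + (1 - \<beta>2) * (S (Suc k) $ i)\<^sup>2)"
  "W (Suc (Suc k)) = W (Suc k) - ah (Suc k) *\<^sub>R (\<chi> i. Mm (Suc k) $ i / V (Suc k) $ i)"
  "Mm 0 = 0" "Bb 0 = 0" "W (Suc 0) = w1"
  by (simp_all add: Mm_def Bb_def W_def g_def S_def V_def ah_def st_def a_def al_def split_beta Let_def)

end

locale agdq = agdp grad z w1 \<delta> \<alpha> \<beta>1 \<beta>2
  for grad :: "real ^ 'n \<Rightarrow> real ^ 'n" and z w1 \<delta> \<alpha> \<beta>1 \<beta>2 +
  fixes G :: real and T :: nat
  assumes \<delta>: "\<delta> > 0" and \<alpha>: "\<alpha> > 0"
    and \<beta>1: "0 \<le> \<beta>1" "\<beta>1 < 1" and \<beta>2: "0 \<le> \<beta>2" "\<beta>2 < 1"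
    and Gd: "G \<ge> \<delta>"
    and gb: "\<And>t. t \<in> {1..T} \<Longrightarrow> linf (g t) \<le> G"
    and grb: "\<And>t. t \<in> {1..T} \<Longrightarrow> linf (grad (W t)) \<le> G"
    and bm: "\<And>t i. t \<ge> 1 \<Longrightarrow> Bb t $ i \<le> Bb (t + 1) $ i"
begin

lemma G0: "G > 0" using \<delta> Gd by simp

lemma a_bounds: assumes "t \<ge> 1" shows "0 \<le> a t" "a t \<le> \<beta>1" "a t < 1"
proof -
  have "sqrt (real t) \<ge> 1" using assms by simp
  then show "0 \<le> a t" "a t \<le> \<beta>1" using \<beta>1 unfolding a_def
    by (auto simp: divide_le_eq intro!: mult_le_cancel_left1[THEN iffD2] divide_nonneg_nonneg)
  then show "a t < 1" using \<beta>1 by simp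
qed

lemma apow_bounds: assumes "t \<ge> 1" "k \<ge> 1" shows "0 \<le> a t ^ k" "a t ^ k \<le> \<beta>1"
proof -
  show "0 \<le> a t ^ k" using a_bounds[OF assms(1)] by simp
  have "a t ^ k \<le> a t ^ 1"
    using a_bounds[OF assms(1)] assms(2) by (intro power_decreasing) auto
  then show "a t ^ k \<le> \<beta>1" using a_bounds[OF assms(1)] by simp
qed

lemma comp_g: "t \<in> {1..T} \<Longrightarrow> \<bar>g t $ i\<bar> \<le> G"
  using gb linf_comp order_trans by blast
lemma comp_grad: "t \<in> {1..T} \<Longrightarrow> \<bar>grad (W t) $ i\<bar> \<le> G"
  using grb linf_comp order_trans by blast
lemma comp_z: "t \<in> {1..T} \<Longrightarrow> \<bar>z t $ i\<bar> \<le> 2 * G"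
proof -
  assume t: "t \<in> {1..T}"
  have "z t $ i = g t $ i - grad (W t) $ i" by (simp add: g_def)
  then show ?thesis using comp_g[OF t, of i] comp_grad[OF t, of i] by linarith
qed

lemma Mm_bound: "t \<le> T \<Longrightarrow> \<bar>Mm t $ i\<bar> \<le> G"
proof (induction t)
  case 0 then show ?case using G0 by (simp add: step)
next
  case (Suc t)
  have a: "0 \<le> a (Suc t)" "a (Suc t) < 1" using a_bounds[of "Suc t"] by auto
  have "\<bar>Mm (Suc t) $ i\<bar> = \<bar>a (Suc t) * Mm t $ i + (1 - a (Suc t)) * g (Suc t) $ i\<bar>"
    by (simp add: step)
  also have "\<dots> \<le> a (Suc t) * \<bar>Mm t $ i\<bar> + (1 - a (Suc t)) * \<bar>g (Suc t) $ i\<bar>"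
    using a by (simp add: abs_mult abs_triangle_ineq[THEN order_trans])
  also have "\<dots> \<le> a (Suc t) * G + (1 - a (Suc t)) * G"
    using a Suc comp_g[of "Suc t" i]
    by (intro add_mono mult_left_mono) auto
  finally show ?case by (simp add: algebra_simps)
qed

lemma div_bound: assumes "\<bar>x\<bar> \<le> G" "1 - \<beta>1 \<le> c" shows "\<bar>x / c\<bar> \<le> G / (1 - \<beta>1)"
proof -
  have c: "c > 0" using assms \<beta>1 by simp
  have "\<bar>x / c\<bar> = \<bar>x\<bar> / c" using c by simp
  also have "\<dots> \<le> G / c" using assms c by (simp add: divide_right_mono)
  also have "\<dots> \<le> G / (1 - \<beta>1)" using assms c G0 \<beta>1 by (intro divide_left_mono) auto
  finally show ?thesis .
qed

lemma S_bound: assumes "t \<in> {1..T}" shows "\<bar>S t $ i\<bar> \<le> 2 * G / (1 - \<beta>1)"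
proof (cases "t = 1")
  case True
  have "\<bar>S t $ i\<bar> = \<bar>Mm 1 $ i / (1 - a 1)\<bar>" using True by (simp add: S_def)
  also have "\<dots> \<le> G / (1 - \<beta>1)" using Mm_bound[of 1 i] assms True a_bounds[of 1]
    by (intro div_bound) auto
  also have "\<dots> \<le> 2 * G / (1 - \<beta>1)" using G0 \<beta>1 by (simp add: divide_right_mono)
  finally show ?thesis .
next
  case False
  then have t: "t \<ge> 2" using assms by auto
  have "S t $ i = Mm t $ i / (1 - a t ^ t) - Mm (t - 1) $ i / (1 - a t ^ (t - 1))"
    using False by (simp add: S_def)
  also have "\<bar>\<dots>\<bar> \<le> \<bar>Mm t $ i / (1 - a t ^ t)\<bar> + \<bar>Mm (t - 1) $ i / (1 - a t ^ (t - 1))\<bar>"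
    by (rule abs_triangle_ineq4)
  also have "\<dots> \<le> G / (1 - \<beta>1) + G / (1 - \<beta>1)"
    using assms t apow_bounds[of t t] apow_bounds[of t "t - 1"]
    by (intro add_mono div_bound Mm_bound) auto
  finally show ?thesis by simp
qed

lemma Bb_bound: "t \<le> T \<Longrightarrow> 0 \<le> Bb t $ i \<and> Bb t $ i \<le> (2 * G / (1 - \<beta>1))\<^sup>2"
proof (induction t)
  case 0 then show ?case by (simp add: step)
next
  case (Suc t)
  have s: "(S (Suc t) $ i)\<^sup>2 \<le> (2 * G / (1 - \<beta>1))\<^sup>2"
    using S_bound[of "Suc t" i] Suc.prems by (intro power2_le_iff_abs_le[THEN iffD2]) (use G0 \<beta>1 in auto)
  have e: "Bb (Suc t) $ i = \<beta>2 * (Bb t $ i) + (1 - \<beta>2) * (S (Suc t) $ i)\<^sup>2" by (simp add: step)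
  have "\<beta>2 * (Bb t $ i) + (1 - \<beta>2) * (S (Suc t) $ i)\<^sup>2 \<le> \<beta>2 * (2 * G / (1 - \<beta>1))\<^sup>2 + (1 - \<beta>2) * (2 * G / (1 - \<beta>1))\<^sup>2"
    using Suc s \<beta>2 by (intro add_mono mult_left_mono) auto
  moreover have "0 \<le> \<beta>2 * (Bb t $ i) + (1 - \<beta>2) * (S (Suc t) $ i)\<^sup>2"
    using Suc \<beta>2 by simp
  ultimately show ?case unfolding e by (simp add: algebra_simps)
qed

lemma pow_b2: "t \<ge> 1 \<Longrightarrow> \<beta>2 ^ t \<le> \<beta>2"
  using \<beta>2 power_decreasing[of 1 t \<beta>2] by simp

lemma V_lower: assumes "t \<ge> 1" shows "V t $ i \<ge> \<delta> * sqrt (1 - \<beta>2)"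
proof -
  have "\<delta> * sqrt (1 - \<beta>2) \<le> \<delta> * sqrt (1 - \<beta>2 ^ t)" using pow_b2[OF assms] \<delta> by simp
  then show ?thesis by (simp add: V_def)
qed

lemma lowpos: "\<delta> * sqrt (1 - \<beta>2) > 0" using \<delta> \<beta>2 by simp

lemma V_upper: assumes "t \<in> {1..T}" shows "V t $ i \<le> 2 * G / (1 - \<beta>1)"
proof -
  have "sqrt (Bb t $ i) \<le> sqrt ((2 * G / (1 - \<beta>1))\<^sup>2)" using Bb_bound[of t i] assms
    by (intro real_sqrt_le_mono) auto
  also have "\<dots> = 2 * G / (1 - \<beta>1)" using G0 \<beta>1 by simp
  finally have 1: "sqrt (Bb t $ i) \<le> 2 * G / (1 - \<beta>1)" .
  have "\<beta>2 ^ t \<ge> 0" using \<beta>2 by simp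
  then have "sqrt (1 - \<beta>2 ^ t) \<le> 1" by simp
  then have "\<delta> * sqrt (1 - \<beta>2 ^ t) \<le> \<delta>" using \<delta> by (simp add: mult_left_le)
  also have "\<delta> \<le> G" by (rule Gd)
  also have "G \<le> 2 * G / (1 - \<beta>1)" using G0 \<beta>1 by (simp add: le_divide_eq)
  finally show ?thesis using 1 by (simp add: V_def)
qed

lemma U_lower: assumes "t \<ge> 1" shows "U t $ i \<ge> \<delta> * sqrt (1 - \<beta>2)"
  using V_lower[of "t - 1" i] assms by (auto simp: U_def)

lemma U_le_V: assumes "t \<ge> 1" shows "U t $ i \<le> V t $ i"
proof (cases "t = 1")
  case True then show ?thesis by (simp add: U_def V_def)
next
  case False
  then obtain k where k: "t = Suc k" "k \<ge> 1" using assms by (cases t) auto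
  have "Bb k $ i \<le> Bb t $ i" using bm[of k i] k by simp
  moreover have "\<beta>2 ^ t \<le> \<beta>2 ^ k" using \<beta>2 k by (intro power_decreasing) auto
  ultimately have "sqrt (Bb k $ i) \<le> sqrt (Bb t $ i)" "\<delta> * sqrt (1 - \<beta>2 ^ k) \<le> \<delta> * sqrt (1 - \<beta>2 ^ t)"
    using \<delta> by (auto intro: real_sqrt_le_mono)
  then have "max (sqrt (Bb k $ i)) (\<delta> * sqrt (1 - \<beta>2 ^ k)) \<le> max (sqrt (Bb t $ i)) (\<delta> * sqrt (1 - \<beta>2 ^ t))"
    by (intro max.mono)
  then show ?thesis using k unfolding U_def V_def by simp
qed

lemma ah_bounds: assumes "t \<ge> 1"
  shows "0 \<le> ah t" "ah t \<le> \<alpha> / (sqrt (real t) * (1 - \<beta>1))" "\<alpha> * sqrt (1 - \<beta>2) / sqrt (real t) \<le> ah t"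
proof -
  have c: "1 - \<beta>1 \<le> 1 - a t ^ t" "1 - a t ^ t \<le> 1" using apow_bounds[of t t] assms by auto
  have c0: "0 < 1 - a t ^ t" using c \<beta>1 by simp
  have q: "sqrt (1 - \<beta>2) \<le> sqrt (1 - \<beta>2 ^ t)" "sqrt (1 - \<beta>2 ^ t) \<le> 1" "0 \<le> sqrt (1 - \<beta>2 ^ t)"
    using pow_b2[OF assms] \<beta>2 by auto
  have st: "sqrt (real t) > 0" using assms by simp
  have al0: "al t \<ge> 0" using \<alpha> st by (simp add: al_def)
  show "0 \<le> ah t" unfolding ah_def using al0 q c0 by simp
  have "ah t \<le> al t * 1 / (1 - \<beta>1)" unfolding ah_def
    using al0 q c c0 \<beta>1 by (intro frac_le mult_left_mono) auto
  then show "ah t \<le> \<alpha> / (sqrt (real t) * (1 - \<beta>1))" by (simp add: al_def)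
  have "al t * sqrt (1 - \<beta>2) / 1 \<le> ah t" unfolding ah_def
    using al0 q c c0 \<beta>1 by (intro frac_le mult_left_mono) auto
  then show "\<alpha> * sqrt (1 - \<beta>2) / sqrt (real t) \<le> ah t" by (simp add: al_def)
qed

definition "Ac = \<alpha> * sqrt (1 - \<beta>2) * (1 - \<beta>1)\<^sup>2 / (2 * G)"
definition "B1 = \<alpha> * \<beta>1 * G\<^sup>2 / ((1 - \<beta>1) * (\<delta> * sqrt (1 - \<beta>2)))"
definition "c2 = 2 * \<alpha> * G\<^sup>2 / (1 - \<beta>1)"

lemma hb: "t \<ge> 1 \<Longrightarrow> ah t \<le> \<alpha> / (1 - \<beta>1)"
proof -
  assume t: "t \<ge> 1"
  have "ah t \<le> \<alpha> / (sqrt (real t) * (1 - \<beta>1))" by (rule ah_bounds(2)[OF t])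
  also have "\<dots> \<le> \<alpha> / (1 * (1 - \<beta>1))" using t \<alpha> \<beta>1
    by (intro divide_left_mono mult_right_mono) auto
  finally show ?thesis by simp
qed


lemma coord_a:
  assumes t: "t \<in> {1..T}"
  shows "Ac / sqrt (real t) * (grad (W t) $ i)\<^sup>2 \<le> ah t * (1 - a t) * (grad (W t) $ i)\<^sup>2 / V t $ i"
proof -
  have t1: "t \<ge> 1" using t by simp
  define x where "x = (grad (W t) $ i)\<^sup>2"
  have x0: "x \<ge> 0" unfolding x_def by simp
  have v0: "V t $ i > 0" using V_lower[OF t1, of i] lowpos by linarith
  have e1: "x / (2 * G / (1 - \<beta>1)) \<le> x / V t $ i"
    using V_upper[OF t, of i] v0 x0 G0 \<beta>1 by (intro divide_left_mono) auto
  have h1: "\<alpha> * sqrt (1 - \<beta>2) / sqrt (real t) \<le> ah t" by (rule ah_bounds(3)[OF t1])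
  have h2: "1 - \<beta>1 \<le> 1 - a t" using a_bounds[OF t1] by simp
  have p0: "0 \<le> \<alpha> * sqrt (1 - \<beta>2) / sqrt (real t)" using \<alpha> \<beta>2 by simp
  have e2: "\<alpha> * sqrt (1 - \<beta>2) / sqrt (real t) * (1 - \<beta>1) \<le> ah t * (1 - a t)"
    by (rule mult_mono[OF h1 h2]) (use ah_bounds(1)[OF t1] \<beta>1 in auto)
  have e3: "\<alpha> * sqrt (1 - \<beta>2) / sqrt (real t) * (1 - \<beta>1) * (x / (2 * G / (1 - \<beta>1)))
      \<le> ah t * (1 - a t) * (x / V t $ i)"
    by (rule mult_mono[OF e2 e1]) (use ah_bounds(1)[OF t1] a_bounds[OF t1] x0 v0 G0 \<beta>1 in auto)
  have "Ac / sqrt (real t) * x = \<alpha> * sqrt (1 - \<beta>2) / sqrt (real t) * (1 - \<beta>1) * (x / (2 * G / (1 - \<beta>1)))"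
    using G0 \<beta>1 by (simp add: Ac_def field_simps power2_eq_square)
  then show ?thesis using e3 unfolding x_def by simp
qed


lemma coord_b:
  assumes t: "t \<in> {1..T}"
  shows "\<bar>ah t * a t * grad (W t) $ i * Mm (t - 1) $ i / V t $ i\<bar> \<le> B1 / real t"
proof -
  have t1: "t \<ge> 1" using t by simp
  have v0: "V t $ i \<ge> \<delta> * sqrt (1 - \<beta>2)" using V_lower[OF t1, of i] .
  have vp: "V t $ i > 0" using v0 lowpos by linarith
  have p: "\<bar>grad (W t) $ i * Mm (t - 1) $ i\<bar> \<le> G * G"
    unfolding abs_mult by (rule mult_mono) (use comp_grad[OF t, of i] Mm_bound[of "t - 1" i] t G0 in auto)
  have q: "\<bar>grad (W t) $ i * Mm (t - 1) $ i\<bar> / V t $ i \<le> G * G / (\<delta> * sqrt (1 - \<beta>2))"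
    by (rule frac_le[OF _ p lowpos v0]) (use G0 in simp)
  have r: "ah t * a t \<le> \<alpha> / (sqrt (real t) * (1 - \<beta>1)) * (\<beta>1 / sqrt (real t))"
    by (rule mult_mono[OF ah_bounds(2)[OF t1]]) (use a_bounds[OF t1] \<alpha> \<beta>1 in \<open>auto simp: a_def\<close>)
  have "\<bar>ah t * a t * grad (W t) $ i * Mm (t - 1) $ i / V t $ i\<bar>
      = (ah t * a t) * (\<bar>grad (W t) $ i * Mm (t - 1) $ i\<bar> / V t $ i)"
    using ah_bounds(1)[OF t1] a_bounds[OF t1] vp by (simp add: abs_mult)
  also have "\<dots> \<le> (\<alpha> / (sqrt (real t) * (1 - \<beta>1)) * (\<beta>1 / sqrt (real t))) * (G * G / (\<delta> * sqrt (1 - \<beta>2)))"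
    by (rule mult_mono[OF r q]) (use \<alpha> \<beta>1 t1 vp in auto)
  also have "\<dots> = B1 / real t" using t1 \<beta>1
    by (simp add: B1_def field_simps power2_eq_square)
  finally show ?thesis .
qed


lemma coord_c:
  assumes t: "t \<in> {1..T}"
  shows "\<bar>ah t * (1 - a t) * grad (W t) $ i * z t $ i * (1 / V t $ i - 1 / U t $ i)\<bar>
     \<le> c2 * (1 / U t $ i - 1 / V t $ i)"
proof -
  have t1: "t \<ge> 1" using t by simp
  have u0: "U t $ i > 0" using U_lower[OF t1, of i] lowpos by linarith
  have d: "1 / V t $ i \<le> 1 / U t $ i" using U_le_V[OF t1, of i] u0
    by (intro divide_left_mono) auto
  have p: "\<bar>grad (W t) $ i * z t $ i\<bar> \<le> G * (2 * G)"
    unfolding abs_mult by (rule mult_mono) (use comp_grad[OF t, of i] comp_z[OF t, of i] G0 in auto)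
  have r: "ah t * (1 - a t) \<le> \<alpha> / (1 - \<beta>1) * 1"
    by (rule mult_mono[OF hb[OF t1]]) (use a_bounds[OF t1] \<alpha> \<beta>1 in auto)
  have "\<bar>ah t * (1 - a t) * grad (W t) $ i * z t $ i * (1 / V t $ i - 1 / U t $ i)\<bar>
     = (ah t * (1 - a t)) * \<bar>grad (W t) $ i * z t $ i\<bar> * (1 / U t $ i - 1 / V t $ i)"
    using ah_bounds(1)[OF t1] a_bounds[OF t1] d by (simp add: abs_mult)
  also have "\<dots> \<le> (\<alpha> / (1 - \<beta>1) * 1) * (G * (2 * G)) * (1 / U t $ i - 1 / V t $ i)"
    by (rule mult_right_mono[OF mult_mono[OF r p]]) (use ah_bounds(1)[OF t1] a_bounds[OF t1] d \<alpha> \<beta>1 in auto)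
  also have "\<dots> = c2 * (1 / U t $ i - 1 / V t $ i)" by (simp add: c2_def power2_eq_square)
  finally show ?thesis .
qed

lemma coord_d:
  assumes t: "t \<in> {1..T}"
  shows "(ah t * (Mm t $ i / V t $ i))\<^sup>2 \<le> \<alpha>\<^sup>2 * G\<^sup>2 / ((1 - \<beta>1)\<^sup>2 * \<delta>\<^sup>2 * (1 - \<beta>2)) / real t"
proof -
  have t1: "t \<ge> 1" using t by simp
  have v0: "V t $ i \<ge> \<delta> * sqrt (1 - \<beta>2)" using V_lower[OF t1, of i] .
  have vp: "V t $ i > 0" using v0 lowpos by linarith
  have q: "\<bar>Mm t $ i\<bar> / V t $ i \<le> G / (\<delta> * sqrt (1 - \<beta>2))"
    by (rule frac_le[OF _ Mm_bound lowpos v0]) (use G0 t in auto)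
  have "\<bar>ah t * (Mm t $ i / V t $ i)\<bar> = ah t * (\<bar>Mm t $ i\<bar> / V t $ i)"
    using ah_bounds(1)[OF t1] vp by (simp add: abs_mult)
  also have "\<dots> \<le> \<alpha> / (sqrt (real t) * (1 - \<beta>1)) * (G / (\<delta> * sqrt (1 - \<beta>2)))"
    by (rule mult_mono[OF ah_bounds(2)[OF t1] q]) (use \<alpha> \<beta>1 t1 vp in auto)
  finally have "\<bar>ah t * (Mm t $ i / V t $ i)\<bar> \<le> \<alpha> / (sqrt (real t) * (1 - \<beta>1)) * (G / (\<delta> * sqrt (1 - \<beta>2)))" .
  then have "(ah t * (Mm t $ i / V t $ i))\<^sup>2 \<le> (\<alpha> / (sqrt (real t) * (1 - \<beta>1)) * (G / (\<delta> * sqrt (1 - \<beta>2))))\<^sup>2"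
    by (intro power2_le_iff_abs_le[THEN iffD2]) (use \<alpha> \<beta>1 \<beta>2 G0 \<delta> in auto)
  also have "\<dots> = \<alpha>\<^sup>2 * G\<^sup>2 / ((1 - \<beta>1)\<^sup>2 * \<delta>\<^sup>2 * (1 - \<beta>2)) / real t"
    using t1 \<beta>2 by (simp add: power_mult_distrib power_divide)
  finally show ?thesis .
qed


definition "Dc = \<alpha>\<^sup>2 * G\<^sup>2 / ((1 - \<beta>1)\<^sup>2 * \<delta>\<^sup>2 * (1 - \<beta>2))"

lemma coord_all:
  assumes t: "t \<in> {1..T}"
  shows "ah t * grad (W t) $ i * Mm t $ i / V t $ i \<ge>
     Ac / sqrt (real t) * (grad (W t) $ i)\<^sup>2 + ah t * (1 - a t) * grad (W t) $ i * z t $ i / U t $ i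
     - c2 * (1 / U t $ i - 1 / V t $ i) - B1 / real t"
proof -
  have t1: "t \<ge> 1" using t by simp
  then obtain k where k: "t = Suc k" by (cases t) auto
  have u0: "U t $ i > 0" using U_lower[OF t1, of i] lowpos by linarith
  have v0: "V t $ i > 0" using V_lower[OF t1, of i] lowpos by linarith
  have m: "Mm t $ i = a t * Mm (t - 1) $ i + (1 - a t) * (grad (W t) $ i + z t $ i)"
    using k by (simp add: step g_def)
  have id: "ah t * grad (W t) $ i * Mm t $ i / V t $ i =
      ah t * a t * grad (W t) $ i * Mm (t - 1) $ i / V t $ i
      + ah t * (1 - a t) * (grad (W t) $ i)\<^sup>2 / V t $ i
      + ah t * (1 - a t) * grad (W t) $ i * z t $ i / U t $ i
      + ah t * (1 - a t) * grad (W t) $ i * z t $ i * (1 / V t $ i - 1 / U t $ i)"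
    unfolding m using u0 v0 by (simp add: field_simps power2_eq_square)
  have b: "- (B1 / real t) \<le> ah t * a t * grad (W t) $ i * Mm (t - 1) $ i / V t $ i"
    using coord_b[OF t, of i] unfolding abs_le_iff by linarith
  have c: "- (c2 * (1 / U t $ i - 1 / V t $ i)) \<le> ah t * (1 - a t) * grad (W t) $ i * z t $ i * (1 / V t $ i - 1 / U t $ i)"
    using coord_c[OF t, of i] unfolding abs_le_iff by linarith
  show ?thesis unfolding id using coord_a[OF t, of i] b c by linarith
qed

lemma one_step:
  fixes f :: "real ^ 'n \<Rightarrow> real" and L :: real
  assumes diff: "\<And>x. (f has_derivative (\<lambda>h. grad x \<bullet> h)) (at x)"
    and smooth: "\<And>x y. norm (grad x - grad y) \<le> L * norm (x - y)"
    and L0: "L \<ge> 0" and t: "t \<in> {1..T}"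
  shows "Ac / sqrt (real t) * (norm (grad (W t)))\<^sup>2 \<le> f (W t) - f (W (t + 1)) - Z t
     + c2 * (\<Sum>i\<in>UNIV. 1 / U t $ i - 1 / V t $ i)
     + real CARD('n) * (B1 + L / 2 * Dc) / real t"
proof -
  have t1: "t \<ge> 1" using t by simp
  then obtain k where k: "t = Suc k" by (cases t) auto
  define q where "q = (\<chi> i. Mm t $ i / V t $ i)"
  have wn: "W (t + 1) = W t - ah t *\<^sub>R q" using k by (simp add: step q_def)
  have de: "f (W (t + 1)) \<le> f (W t) + grad (W t) \<bullet> (W (t + 1) - W t) + L / 2 * (norm (W (t + 1) - W t))\<^sup>2"
    by (rule descent[OF diff smooth])
  have inn: "grad (W t) \<bullet> (W (t + 1) - W t) = - (\<Sum>i\<in>UNIV. ah t * grad (W t) $ i * Mm t $ i / V t $ i)"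
    unfolding wn by (simp add: inner_vec_def q_def sum_negf[symmetric] algebra_simps)
  have "(norm (W (t + 1) - W t))\<^sup>2 = (\<Sum>i\<in>UNIV. (ah t * (Mm t $ i / V t $ i))\<^sup>2)"
    unfolding wn norm2_vec by (simp add: q_def)
  also have "\<dots> \<le> (\<Sum>i\<in>(UNIV::'n set). Dc / real t)"
    by (rule sum_mono) (use coord_d[OF t] in \<open>simp add: Dc_def\<close>)
  finally have nn: "(norm (W (t + 1) - W t))\<^sup>2 \<le> real CARD('n) * (Dc / real t)" by simp
  have sm: "(\<Sum>i\<in>UNIV. ah t * grad (W t) $ i * Mm t $ i / V t $ i) \<ge>
     (\<Sum>i\<in>UNIV. Ac / sqrt (real t) * (grad (W t) $ i)\<^sup>2 + ah t * (1 - a t) * grad (W t) $ i * z t $ i / U t $ i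
     - c2 * (1 / U t $ i - 1 / V t $ i) - B1 / real t)"
    by (rule sum_mono) (rule coord_all[OF t])
  also have "(\<Sum>i\<in>UNIV. Ac / sqrt (real t) * (grad (W t) $ i)\<^sup>2 + ah t * (1 - a t) * grad (W t) $ i * z t $ i / U t $ i
     - c2 * (1 / U t $ i - 1 / V t $ i) - B1 / real t)
     = Ac / sqrt (real t) * (norm (grad (W t)))\<^sup>2 + Z t - c2 * (\<Sum>i\<in>UNIV. 1 / U t $ i - 1 / V t $ i)
       - real CARD('n) * (B1 / real t)"
    by (simp add: sum.distrib sum_subtractf sum_distrib_left[symmetric] sum_divide_distrib[symmetric] norm2_vec Z_def)
  finally have sm2: "Ac / sqrt (real t) * (norm (grad (W t)))\<^sup>2 + Z t - c2 * (\<Sum>i\<in>UNIV. 1 / U t $ i - 1 / V t $ i)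
       - real CARD('n) * (B1 / real t) \<le> (\<Sum>i\<in>UNIV. ah t * grad (W t) $ i * Mm t $ i / V t $ i)" .
  have "L / 2 * (norm (W (t + 1) - W t))\<^sup>2 \<le> L / 2 * (real CARD('n) * (Dc / real t))"
    using nn L0 by (intro mult_left_mono) auto
  moreover have "real CARD('n) * (B1 + L / 2 * Dc) / real t = real CARD('n) * (B1 / real t) + L / 2 * (real CARD('n) * (Dc / real t))"
    using t1 by (simp add: field_simps)
  ultimately show ?thesis using de inn sm2 by linarith
qed


lemma UV_shift: "t \<ge> 1 \<Longrightarrow> V t = U (t + 1)"
  by (simp add: U_def)

lemma pathwise:
  fixes f :: "real ^ 'n \<Rightarrow> real" and L :: real
  assumes diff: "\<And>x. (f has_derivative (\<lambda>h. grad x \<bullet> h)) (at x)"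
    and smooth: "\<And>x y. norm (grad x - grad y) \<le> L * norm (x - y)"
    and L0: "L \<ge> 0" and opt: "\<And>w. f wstar \<le> f w" and T1: "T \<ge> 1"
  shows "Ac * (\<Sum>t=1..T. (norm (grad (W t)))\<^sup>2 / sqrt (real t)) \<le> f w1 - f wstar - (\<Sum>t=1..T. Z t)
     + c2 * (real CARD('n) / (\<delta> * sqrt (1 - \<beta>2)))
     + real CARD('n) * (B1 + L / 2 * Dc) * (ln (real T) + 1)"
proof -
  let ?K = "real CARD('n) * (B1 + L / 2 * Dc)"
  have K0: "?K \<ge> 0" using L0 \<alpha> \<beta>1 \<beta>2 \<delta> G0 by (simp add: B1_def Dc_def)
  have "(\<Sum>t=1..T. Ac / sqrt (real t) * (norm (grad (W t)))\<^sup>2) \<le>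
     (\<Sum>t=1..T. f (W t) - f (W (t + 1)) - Z t + c2 * (\<Sum>i\<in>UNIV. 1 / U t $ i - 1 / V t $ i) + ?K / real t)"
    by (rule sum_mono) (rule one_step[OF diff smooth L0])
  also have "\<dots> = (\<Sum>t=1..T. f (W t) - f (W (Suc t))) - (\<Sum>t=1..T. Z t)
     + c2 * (\<Sum>t=1..T. (\<Sum>i\<in>UNIV. 1 / U t $ i - 1 / V t $ i)) + ?K * (\<Sum>t=1..T. 1 / real t)"
    by (simp add: sum.distrib sum_subtractf sum_distrib_left right_diff_distrib)
  also have "(\<Sum>t=1..T. (\<Sum>i\<in>UNIV. 1 / U t $ i - 1 / V t $ i)) = (\<Sum>i\<in>UNIV. (\<Sum>t=1..T. 1 / U t $ i - 1 / U (Suc t) $ i))"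
    by (subst sum.swap) (simp add: UV_shift)
  also have "(\<Sum>t=1..T. f (W t) - f (W (Suc t))) = f (W 1) - f (W (Suc T))"
    using sum_Suc_diff[of 1 T "\<lambda>t. - f (W t)"] T1 by simp
  finally have *: "(\<Sum>t=1..T. Ac / sqrt (real t) * (norm (grad (W t)))\<^sup>2) \<le>
     f (W 1) - f (W (Suc T)) - (\<Sum>t=1..T. Z t) + c2 * (\<Sum>i\<in>UNIV. (\<Sum>t=1..T. 1 / U t $ i - 1 / U (Suc t) $ i))
     + ?K * (\<Sum>t=1..T. 1 / real t)" .
  have "(\<Sum>i\<in>UNIV. (\<Sum>t=1..T. 1 / U t $ i - 1 / U (Suc t) $ i)) \<le> (\<Sum>i\<in>(UNIV::'n set). 1 / (\<delta> * sqrt (1 - \<beta>2)))"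
  proof (rule sum_mono)
    fix i
    have "(\<Sum>t=1..T. 1 / U t $ i - 1 / U (Suc t) $ i) = 1 / U 1 $ i - 1 / U (Suc T) $ i"
      using sum_Suc_diff[of 1 T "\<lambda>t. - (1 / U t $ i)"] T1 by simp
    also have "\<dots> \<le> 1 / (\<delta> * sqrt (1 - \<beta>2))"
      using U_lower[of "Suc T" i] lowpos by (simp add: U_def)
    finally show "(\<Sum>t=1..T. 1 / U t $ i - 1 / U (Suc t) $ i) \<le> 1 / (\<delta> * sqrt (1 - \<beta>2))" .
  qed
  then have tel: "c2 * (\<Sum>i\<in>UNIV. (\<Sum>t=1..T. 1 / U t $ i - 1 / U (Suc t) $ i)) \<le> c2 * (real CARD('n) / (\<delta> * sqrt (1 - \<beta>2)))"
    using \<alpha> \<beta>1 by (intro mult_left_mono) (auto simp: c2_def)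
  have h: "(\<Sum>t=1..T. 1 / real t) \<le> ln (real T) + 1" by (rule harm_bound[OF T1])
  have "?K * (\<Sum>t=1..T. 1 / real t) \<le> ?K * (ln (real T) + 1)" by (rule mult_left_mono[OF h K0])
  moreover have "f (W 1) = f w1" using step(6) by simp
  moreover have "f wstar \<le> f (W (Suc T))" by (rule opt)
  moreover have "(\<Sum>t=1..T. Ac / sqrt (real t) * (norm (grad (W t)))\<^sup>2) = Ac * (\<Sum>t=1..T. (norm (grad (W t)))\<^sup>2 / sqrt (real t))"
    by (simp add: sum_distrib_left)
  ultimately show ?thesis using * tel by linarith
qed


lemma gradnorm_bound: assumes t: "t \<in> {1..T}" shows "(norm (grad (W t)))\<^sup>2 \<le> real CARD('n) * G\<^sup>2"
proof -
  have "(norm (grad (W t)))\<^sup>2 = (\<Sum>i\<in>UNIV. (grad (W t) $ i)\<^sup>2)" by (rule norm2_vec)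
  also have "\<dots> \<le> (\<Sum>i\<in>(UNIV::'n set). G\<^sup>2)"
    by (rule sum_mono) (use comp_grad[OF t] G0 in \<open>auto intro: power2_le_iff_abs_le[THEN iffD2]\<close>)
  finally show ?thesis by simp
qed

lemma Z_bound: assumes t: "t \<in> {1..T}"
  shows "\<bar>Z t\<bar> \<le> real CARD('n) * (\<alpha> / (1 - \<beta>1) * (2 * G\<^sup>2) / (\<delta> * sqrt (1 - \<beta>2)))"
proof -
  have t1: "t \<ge> 1" using t by simp
  have "\<bar>Z t\<bar> \<le> (\<Sum>i\<in>UNIV. \<bar>ah t * (1 - a t) * grad (W t) $ i * z t $ i / U t $ i\<bar>)"
    unfolding Z_def by (rule sum_abs)
  also have "\<dots> \<le> (\<Sum>i\<in>(UNIV::'n set). \<alpha> / (1 - \<beta>1) * (2 * G\<^sup>2) / (\<delta> * sqrt (1 - \<beta>2)))"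
  proof (rule sum_mono)
    fix i
    have u0: "U t $ i \<ge> \<delta> * sqrt (1 - \<beta>2)" by (rule U_lower[OF t1])
    have up: "U t $ i > 0" using u0 lowpos by linarith
    have p: "\<bar>grad (W t) $ i * z t $ i\<bar> \<le> G * (2 * G)"
      unfolding abs_mult by (rule mult_mono) (use comp_grad[OF t, of i] comp_z[OF t, of i] G0 in auto)
    have r: "ah t * (1 - a t) \<le> \<alpha> / (1 - \<beta>1) * 1"
      by (rule mult_mono[OF hb[OF t1]]) (use a_bounds[OF t1] \<alpha> \<beta>1 in auto)
    have "\<bar>ah t * (1 - a t) * grad (W t) $ i * z t $ i / U t $ i\<bar> = (ah t * (1 - a t)) * (\<bar>grad (W t) $ i * z t $ i\<bar> / U t $ i)"
      using ah_bounds(1)[OF t1] a_bounds[OF t1] up by (simp add: abs_mult)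
    also have "\<dots> \<le> (\<alpha> / (1 - \<beta>1) * 1) * (G * (2 * G) / (\<delta> * sqrt (1 - \<beta>2)))"
      by (rule mult_mono[OF r frac_le[OF _ p lowpos u0]]) (use G0 \<alpha> \<beta>1 up in auto)
    finally show "\<bar>ah t * (1 - a t) * grad (W t) $ i * z t $ i / U t $ i\<bar> \<le> \<alpha> / (1 - \<beta>1) * (2 * G\<^sup>2) / (\<delta> * sqrt (1 - \<beta>2))"
      by (simp add: power2_eq_square mult.left_commute)
  qed
  finally show ?thesis by simp
qed

lemma zeta_bound: "t \<in> {1..T} \<Longrightarrow> norm (z t) \<le> real CARD('n) * (2 * G)"
proof -
  assume t: "t \<in> {1..T}"
  have "norm (z t) \<le> (\<Sum>i\<in>UNIV. \<bar>z t $ i\<bar>)" by (rule norm_le_l1_cart)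
  also have "\<dots> \<le> (\<Sum>i\<in>(UNIV::'n set). 2 * G)" by (rule sum_mono) (rule comp_z[OF t])
  finally show ?thesis by simp
qed

end



lemma comp_meas [measurable]:
  assumes "f \<in> borel_measurable N"
  shows "(\<lambda>x. (f x :: real ^ 'n) $ i) \<in> borel_measurable N"
proof -
  have "continuous_on UNIV (\<lambda>v::real^'n. v $ i)"
    by (intro linear_continuous_on bounded_linear_vec_nth)
  then have "(\<lambda>v::real^'n. v $ i) \<in> borel_measurable borel"
    by (rule borel_measurable_continuous_onI)
  from measurable_compose[OF assms this] show ?thesis .
qed

lemma vec_meas:
  assumes "\<And>i. (\<lambda>x. F x i) \<in> borel_measurable N"
  shows "(\<lambda>x. (\<chi> i. F x i) :: real ^ 'n) \<in> borel_measurable N"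
proof -
  have "\<forall>b\<in>(Basis :: (real^'n) set). (\<lambda>x. (\<chi> i. F x i) \<bullet> b) \<in> borel_measurable N"
  proof
    fix b :: "real ^ 'n" assume "b \<in> Basis"
    then obtain i where b: "b = axis i 1" unfolding Basis_vec_def by auto
    show "(\<lambda>x. (\<chi> i. F x i) \<bullet> b) \<in> borel_measurable N"
      unfolding b inner_axis using assms[of i] by simp
  qed
  then show ?thesis by (simp only: borel_measurable_euclidean_space[symmetric])
qed

lemma state_meas:
  fixes zz :: "'b \<Rightarrow> nat \<Rightarrow> real ^ 'n" and grad :: "real ^ 'n \<Rightarrow> real ^ 'n"
  assumes gm: "grad \<in> borel_measurable borel"
    and zm: "\<And>s. s \<in> {1..K} \<Longrightarrow> (\<lambda>x. zz x s) \<in> borel_measurable N"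
  shows "k \<le> K \<Longrightarrow> (\<lambda>x. fst (agd_state grad b1s b2 \<delta> als w1 (zz x) k)) \<in> borel_measurable N
     \<and> (\<lambda>x. fst (snd (agd_state grad b1s b2 \<delta> als w1 (zz x) k))) \<in> borel_measurable N
     \<and> (\<lambda>x. snd (snd (agd_state grad b1s b2 \<delta> als w1 (zz x) k))) \<in> borel_measurable N"
proof (induction k)
  case 0 then show ?case by simp
next
  case (Suc k)
  define P where "P x = agd_state grad b1s b2 \<delta> als w1 (zz x) k" for x
  have IH: "(\<lambda>x. fst (P x)) \<in> borel_measurable N"
     "(\<lambda>x. fst (snd (P x))) \<in> borel_measurable N"
     "(\<lambda>x. snd (snd (P x))) \<in> borel_measurable N"
    using Suc by (auto simp: P_def)
  have z: "(\<lambda>x. zz x (Suc k)) \<in> borel_measurable N" using zm Suc.prems by auto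
  have g: "(\<lambda>x. grad (fst (P x))) \<in> borel_measurable N"
    using measurable_compose[OF IH(1) gm] .
  note [measurable] = IH z g
  define m where "m x = b1s (Suc k) *\<^sub>R fst (snd (P x)) + (1 - b1s (Suc k)) *\<^sub>R (grad (fst (P x)) + zz x (Suc k))" for x
  have m: "m \<in> borel_measurable N" unfolding m_def by measurable
  note [measurable] = m
  define s where "s x = (if Suc k = 1 then (1 / (1 - b1s 1)) *\<^sub>R m x
               else (1 / (1 - b1s (Suc k) ^ Suc k)) *\<^sub>R m x - (1 / (1 - b1s (Suc k) ^ k)) *\<^sub>R fst (snd (P x)))" for x
  have sm: "s \<in> borel_measurable N"
    by (cases "Suc k = 1") (simp_all add: s_def[abs_def])
  note [measurable] = sm
  define b where "b x = (\<chi> i. b2 * (snd (snd (P x)) $ i) + (1 - b2) * (s x $ i)\<^sup>2)" for x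
  have bm: "b \<in> borel_measurable N" unfolding b_def[abs_def] by (rule vec_meas) measurable
  note [measurable] = bm
  define v where "v x = (\<chi> i. max (sqrt (b x $ i)) (\<delta> * sqrt (1 - b2 ^ Suc k)))" for x
  have vm: "v \<in> borel_measurable N" unfolding v_def[abs_def] by (rule vec_meas) measurable
  note [measurable] = vm
  have q: "(\<lambda>x. (\<chi> i. m x $ i / v x $ i)) \<in> borel_measurable N" by (rule vec_meas) measurable
  note [measurable] = q
  have e: "agd_state grad b1s b2 \<delta> als w1 (zz x) (Suc k) =
     (fst (P x) - (als (Suc k) * sqrt (1 - b2 ^ Suc k) / (1 - b1s (Suc k) ^ Suc k)) *\<^sub>R (\<chi> i. m x $ i / v x $ i), m x, b x)" for x
  proof -
    obtain w mp bp where e0: "P x = (w, mp, bp)" by (cases "P x") auto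
    have e1: "agd_state grad b1s b2 \<delta> als w1 (zz x) k = (w, mp, bp)" using e0 by (simp add: P_def)
    show ?thesis unfolding agd_state.simps(2) e1 m_def s_def b_def v_def e0 Let_def prod.case fst_conv snd_conv diff_Suc_1 ..
  qed
  have w: "(\<lambda>x. fst (P x) - (als (Suc k) * sqrt (1 - b2 ^ Suc k) / (1 - b1s (Suc k) ^ Suc k)) *\<^sub>R (\<chi> i. m x $ i / v x $ i)) \<in> borel_measurable N"
    by (intro borel_measurable_diff borel_measurable_scaleR borel_measurable_const IH(1) q)
  have mm: "(\<lambda>x. m x) \<in> borel_measurable N" "(\<lambda>x. b x) \<in> borel_measurable N" using m bm by simp_all
  show ?case unfolding e fst_conv snd_conv using w mm by blast
qed


lemma state_dep:
  fixes grad :: "real ^ 'n \<Rightarrow> real ^ 'n"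
  shows "(\<forall>s\<in>{1..k}. z s = z' s) \<Longrightarrow> agd_state grad b1s b2 \<delta> als w1 z k = agd_state grad b1s b2 \<delta> als w1 z' k"
proof (induction k)
  case 0 then show ?case by simp
next
  case (Suc k)
  then have e: "agd_state grad b1s b2 \<delta> als w1 z k = agd_state grad b1s b2 \<delta> als w1 z' k" by auto
  have e2: "z (Suc k) = z' (Suc k)" using Suc.prems by auto
  show ?case by (simp only: agd_state.simps(2) e Let_def e2)
qed

lemma grad_cont:
  fixes grad :: "'a::real_normed_vector \<Rightarrow> 'b::real_normed_vector"
  assumes sm: "\<And>x y. norm (grad x - grad y) \<le> L * norm (x - y)" and L0: "L \<ge> 0"
  shows "continuous_on UNIV grad"
  unfolding continuous_on_iff
proof (intro ballI allI impI)
  fix x :: 'a and e :: real assume e: "e > 0"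
  show "\<exists>d>0. \<forall>x'\<in>UNIV. dist x' x < d \<longrightarrow> dist (grad x') (grad x) < e"
  proof (intro exI[of _ "e / (L + 1)"] conjI ballI impI)
    show "e / (L + 1) > 0" using e L0 by simp
    fix x' assume d: "dist x' x < e / (L + 1)"
    have "dist (grad x') (grad x) \<le> L * dist x' x" using sm[of x' x] by (simp add: dist_norm)
    also have "\<dots> \<le> L * (e / (L + 1))" using d L0 by (intro mult_left_mono) auto
    also have "\<dots> < e" using e L0 by (simp add: field_simps)
    finally show "dist (grad x') (grad x) < e" .
  qed
qed

lemma L_nonneg:
  fixes grad :: "real ^ 'n \<Rightarrow> real ^ 'n"
  assumes sm: "\<And>x y. norm (grad x - grad y) \<le> L * norm (x - y)"
  shows "L \<ge> 0"
proof (rule ccontr)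
  assume "\<not> L \<ge> 0"
  then have L: "L < 0" by simp
  define y :: "real ^ 'n" where "y = (\<chi> i. 1)"
  have "y \<noteq> 0" unfolding y_def by (metis vec_lambda_beta zero_index zero_neq_one)
  then have "norm (0 - y) > 0" by simp
  then have "L * norm (0 - y) < 0" using L by (simp add: mult_neg_pos)
  with sm[of 0 y] show False by (smt (verit) norm_ge_zero)
qed




lemma link_W: "agdp.W grad z w1 \<delta> \<alpha> \<beta>1 \<beta>2 t = agd_w grad (\<lambda>t. \<beta>1 / sqrt (real t)) \<beta>2 \<delta> (\<lambda>t. \<alpha> / sqrt (real t)) w1 z t"
  by (simp add: agdp.W_def agdp.st_def agd_w_def)
lemma link_g: "agdp.g grad z w1 \<delta> \<alpha> \<beta>1 \<beta>2 t = agd_g grad (\<lambda>t. \<beta>1 / sqrt (real t)) \<beta>2 \<delta> (\<lambda>t. \<alpha> / sqrt (real t)) w1 z t"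
  by (simp add: agdp.g_def agd_g_def link_W)
lemma link_b: "agdp.Bb grad z w1 \<delta> \<alpha> \<beta>1 \<beta>2 t = agd_b grad (\<lambda>t. \<beta>1 / sqrt (real t)) \<beta>2 \<delta> (\<lambda>t. \<alpha> / sqrt (real t)) w1 z t"
  by (simp add: agdp.Bb_def agdp.st_def agd_b_def)

locale agdm =
  fixes f :: "real ^ 'n \<Rightarrow> real" and grad :: "real ^ 'n \<Rightarrow> real ^ 'n"
    and M :: "'a measure" and \<zeta> :: "nat \<Rightarrow> 'a \<Rightarrow> real ^ 'n"
    and wstar w1 :: "real ^ 'n"
    and L G \<delta> \<alpha> \<beta>1 \<beta>2 :: real and T :: nat
  assumes P: "prob_space M"
    and diff: "\<And>x. (f has_derivative (\<lambda>h. grad x \<bullet> h)) (at x)"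
    and opt: "\<And>w. f wstar \<le> f w"
    and smooth: "\<And>x y. norm (grad x - grad y) \<le> L * norm (x - y)"
    and \<delta>: "\<delta> > 0" and \<alpha>: "\<alpha> > 0"
    and \<beta>1: "0 \<le> \<beta>1" "\<beta>1 < 1" and \<beta>2: "0 \<le> \<beta>2" "\<beta>2 < 1"
    and T: "T \<ge> 3"
    and Gd: "G \<ge> \<delta>"
    and meas: "\<And>t. t \<in> {1..T} \<Longrightarrow> \<zeta> t \<in> borel_measurable M"
    and indep: "prob_space.indep_vars M (\<lambda>_. borel) \<zeta> {1..T}"
    and mean0: "\<And>t. t \<in> {1..T} \<Longrightarrow> integral\<^sup>L M (\<zeta> t) = 0"
    and gbound: "\<And>t \<omega>. t \<in> {1..T} \<Longrightarrow> \<omega> \<in> space M \<Longrightarrow>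
       linf (agd_g grad (\<lambda>t. \<beta>1 / sqrt (real t)) \<beta>2 \<delta> (\<lambda>t. \<alpha> / sqrt (real t)) w1
               (\<lambda>s. \<zeta> s \<omega>) t) \<le> G"
    and gradbound: "\<And>t \<omega>. t \<in> {1..T} \<Longrightarrow> \<omega> \<in> space M \<Longrightarrow>
       linf (grad (agd_w grad (\<lambda>t. \<beta>1 / sqrt (real t)) \<beta>2 \<delta> (\<lambda>t. \<alpha> / sqrt (real t)) w1
               (\<lambda>s. \<zeta> s \<omega>) t)) \<le> G"
    and bmono: "\<And>t i \<omega>. t \<ge> 1 \<Longrightarrow> \<omega> \<in> space M \<Longrightarrow>
       agd_b grad (\<lambda>t. \<beta>1 / sqrt (real t)) \<beta>2 \<delta> (\<lambda>t. \<alpha> / sqrt (real t)) w1 (\<lambda>s. \<zeta> s \<omega>) t $ i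
       \<le> agd_b grad (\<lambda>t. \<beta>1 / sqrt (real t)) \<beta>2 \<delta> (\<lambda>t. \<alpha> / sqrt (real t)) w1 (\<lambda>s. \<zeta> s \<omega>) (t + 1) $ i"
begin

sublocale prob_space M by (rule P)

lemma Q: "\<omega> \<in> space M \<Longrightarrow> agdq grad (\<lambda>s. \<zeta> s \<omega>) w1 \<delta> \<alpha> \<beta>1 \<beta>2 G T"
  unfolding agdq_def link_W link_g link_b
  using \<delta> \<alpha> \<beta>1 \<beta>2 Gd gbound gradbound bmono by auto

lemma L0: "L \<ge> 0" by (rule L_nonneg[OF smooth])

definition "Wo \<omega> t = agdp.W grad (\<lambda>s. \<zeta> s \<omega>) w1 \<delta> \<alpha> \<beta>1 \<beta>2 t"
definition "Zo \<omega> t = agdp.Z grad (\<lambda>s. \<zeta> s \<omega>) w1 \<delta> \<alpha> \<beta>1 \<beta>2 t"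
definition "Ac0 = \<alpha> * sqrt (1 - \<beta>2) * (1 - \<beta>1)\<^sup>2 / (2 * G)"
definition "R0 = f w1 - f wstar + 2 * \<alpha> * G\<^sup>2 / (1 - \<beta>1) * (real CARD('n) / (\<delta> * sqrt (1 - \<beta>2)))
     + real CARD('n) * (\<alpha> * \<beta>1 * G\<^sup>2 / ((1 - \<beta>1) * (\<delta> * sqrt (1 - \<beta>2)))
        + L / 2 * (\<alpha>\<^sup>2 * G\<^sup>2 / ((1 - \<beta>1)\<^sup>2 * \<delta>\<^sup>2 * (1 - \<beta>2)))) * (ln (real T) + 1)"

lemma pw: assumes "\<omega> \<in> space M"
  shows "Ac0 * (\<Sum>t=1..T. (norm (grad (Wo \<omega> t)))\<^sup>2 / sqrt (real t)) \<le> R0 - (\<Sum>t=1..T. Zo \<omega> t)"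
proof -
  have q: "agdq grad (\<lambda>s. \<zeta> s \<omega>) w1 \<delta> \<alpha> \<beta>1 \<beta>2 G T" by (rule Q[OF assms])
  show ?thesis
    using agdq.pathwise[OF q diff smooth L0 opt] T
    unfolding agdq.Ac_def[OF q] agdq.c2_def[OF q] agdq.B1_def[OF q] agdq.Dc_def[OF q] Wo_def Zo_def Ac0_def R0_def
    by simp
qed


lemma gm: "grad \<in> borel_measurable borel"
  by (rule borel_measurable_continuous_onI[OF grad_cont[OF smooth L0]])

lemma st_meas: "k \<le> T \<Longrightarrow>
  (\<lambda>\<omega>. fst (agd_state grad (\<lambda>t. \<beta>1 / sqrt (real t)) \<beta>2 \<delta> (\<lambda>t. \<alpha> / sqrt (real t)) w1 (\<lambda>s. \<zeta> s \<omega>) k)) \<in> borel_measurable M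
  \<and> (\<lambda>\<omega>. fst (snd (agd_state grad (\<lambda>t. \<beta>1 / sqrt (real t)) \<beta>2 \<delta> (\<lambda>t. \<alpha> / sqrt (real t)) w1 (\<lambda>s. \<zeta> s \<omega>) k))) \<in> borel_measurable M
  \<and> (\<lambda>\<omega>. snd (snd (agd_state grad (\<lambda>t. \<beta>1 / sqrt (real t)) \<beta>2 \<delta> (\<lambda>t. \<alpha> / sqrt (real t)) w1 (\<lambda>s. \<zeta> s \<omega>) k))) \<in> borel_measurable M"
  using state_meas[OF gm, of T "\<lambda>\<omega> s. \<zeta> s \<omega>" M k] meas by simp

lemma Wo_meas [measurable]: "t \<le> T \<Longrightarrow> (\<lambda>\<omega>. Wo \<omega> t) \<in> borel_measurable M"
  unfolding Wo_def agdp.W_def agdp.st_def using st_meas[of "t - 1"] by simp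

lemma Bb_meas: "k \<le> T \<Longrightarrow> (\<lambda>\<omega>. agdp.Bb grad (\<lambda>s. \<zeta> s \<omega>) w1 \<delta> \<alpha> \<beta>1 \<beta>2 k) \<in> borel_measurable M"
  unfolding agdp.Bb_def agdp.st_def using st_meas[of k] by simp

lemma U_meas [measurable]: "t \<le> T \<Longrightarrow> (\<lambda>\<omega>. agdp.U grad (\<lambda>s. \<zeta> s \<omega>) w1 \<delta> \<alpha> \<beta>1 \<beta>2 t $ i) \<in> borel_measurable M"
proof (cases "t = 1")
  case True then show ?thesis by (simp add: agdp.U_def)
next
  case False
  assume t: "t \<le> T"
  have b: "(\<lambda>\<omega>. agdp.Bb grad (\<lambda>s. \<zeta> s \<omega>) w1 \<delta> \<alpha> \<beta>1 \<beta>2 (t - 1)) \<in> borel_measurable M"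
    using Bb_meas[of "t - 1"] t by simp
  have b': "(\<lambda>\<omega>. agdp.Bb grad (\<lambda>s. \<zeta> s \<omega>) w1 \<delta> \<alpha> \<beta>1 \<beta>2 (t - Suc 0)) \<in> borel_measurable M"
    using b by simp
  note [measurable] = b b'
  show ?thesis using False by (simp add: agdp.U_def agdp.V_def) measurable
qed

lemma n2_meas [measurable]: "t \<le> T \<Longrightarrow> (\<lambda>\<omega>. (norm (grad (Wo \<omega> t)))\<^sup>2) \<in> borel_measurable M"
proof -
  assume t: "t \<le> T"
  have "(\<lambda>\<omega>. grad (Wo \<omega> t)) \<in> borel_measurable M" using measurable_compose[OF Wo_meas[OF t] gm] .
  then show ?thesis by measurable
qed

lemma Zo_meas [measurable]: "t \<in> {1..T} \<Longrightarrow> (\<lambda>\<omega>. Zo \<omega> t) \<in> borel_measurable M"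
proof -
  assume t: "t \<in> {1..T}"
  have g: "(\<lambda>\<omega>. grad (Wo \<omega> t)) \<in> borel_measurable M" using measurable_compose[OF Wo_meas gm] t by simp
  have u: "\<And>i. (\<lambda>\<omega>. agdp.U grad (\<lambda>s. \<zeta> s \<omega>) w1 \<delta> \<alpha> \<beta>1 \<beta>2 t $ i) \<in> borel_measurable M" using U_meas t by simp
  have z: "\<zeta> t \<in> borel_measurable M" using meas t by simp
  note [measurable] = g u z
  show ?thesis unfolding Zo_def agdp.Z_def Wo_def[symmetric] by measurable
qed


abbreviation "ST x k \<equiv> agd_state grad (\<lambda>t. \<beta>1 / sqrt (real t)) \<beta>2 \<delta> (\<lambda>t. \<alpha> / sqrt (real t)) w1 x k"

definition "Fy t i x = grad (agdp.W grad x w1 \<delta> \<alpha> \<beta>1 \<beta>2 t) $ i / agdp.U grad x w1 \<delta> \<alpha> \<beta>1 \<beta>2 t $ i"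

lemma Fy_alt: "Fy t i x = grad (fst (ST x (t - 1))) $ i /
   (if t = 1 then \<delta> * sqrt (1 - \<beta>2) else max (sqrt (snd (snd (ST x (t - 1))) $ i)) (\<delta> * sqrt (1 - \<beta>2 ^ (t - 1))))"
  by (simp add: Fy_def agdp.W_def agdp.U_def agdp.V_def agdp.Bb_def agdp.st_def)

lemma Fy_meas: assumes t: "t \<in> {1..T}"
  shows "Fy t i \<in> borel_measurable (PiM {1..t - 1} (\<lambda>_. borel))"
proof -
  have zm: "\<And>s. s \<in> {1..t - 1} \<Longrightarrow> (\<lambda>x. x s) \<in> borel_measurable (PiM {1..t - 1} (\<lambda>_. borel :: (real^'n) measure))"
    by (rule measurable_component_singleton)
  have sm: "(\<lambda>x. fst (ST x (t - 1))) \<in> borel_measurable (PiM {1..t - 1} (\<lambda>_. borel))"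
     "(\<lambda>x. snd (snd (ST x (t - 1)))) \<in> borel_measurable (PiM {1..t - 1} (\<lambda>_. borel))"
    using state_meas[OF gm, of "t - 1" "\<lambda>x s. x s" "PiM {1..t - 1} (\<lambda>_. borel)" "t - 1"] zm by auto
  have g: "(\<lambda>x. grad (fst (ST x (t - 1)))) \<in> borel_measurable (PiM {1..t - 1} (\<lambda>_. borel))"
    using measurable_compose[OF sm(1) gm] .
  note [measurable] = sm g
  show ?thesis unfolding Fy_alt[abs_def] by measurable
qed

lemma Fy_eq: "t \<ge> 1 \<Longrightarrow> Fy t i (restrict (\<lambda>s. \<zeta> s \<omega>) {1..t - 1}) = grad (Wo \<omega> t) $ i / agdp.U grad (\<lambda>s. \<zeta> s \<omega>) w1 \<delta> \<alpha> \<beta>1 \<beta>2 t $ i"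
proof -
  have "ST (restrict (\<lambda>s. \<zeta> s \<omega>) {1..t - 1}) (t - 1) = ST (\<lambda>s. \<zeta> s \<omega>) (t - 1)"
    by (rule state_dep) simp
  then show ?thesis unfolding Fy_alt Wo_def
    by (simp add: agdp.W_def agdp.U_def agdp.V_def agdp.Bb_def agdp.st_def)
qed

lemma indep_Y: assumes t: "t \<in> {1..T}"
  shows "indep_var borel (\<lambda>\<omega>. grad (Wo \<omega> t) $ i / agdp.U grad (\<lambda>s. \<zeta> s \<omega>) w1 \<delta> \<alpha> \<beta>1 \<beta>2 t $ i) borel (\<lambda>\<omega>. \<zeta> t \<omega> $ i)"
proof -
  have ind2: "indep_var (PiM {1..t - 1} (\<lambda>_. borel)) (\<lambda>\<omega>. restrict (\<lambda>s. \<zeta> s \<omega>) {1..t - 1})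
      (PiM {t} (\<lambda>_. borel)) (\<lambda>\<omega>. restrict (\<lambda>s. \<zeta> s \<omega>) {t})"
    by (rule indep_var_restrict[OF indep]) (use t in auto)
  have g2: "(\<lambda>x. x t $ i) \<in> borel_measurable (PiM {t} (\<lambda>_. borel :: (real^'n) measure))"
    using measurable_component_singleton[of t "{t}" "\<lambda>_. borel :: (real^'n) measure"] by measurable
  have "indep_var borel (Fy t i \<circ> (\<lambda>\<omega>. restrict (\<lambda>s. \<zeta> s \<omega>) {1..t - 1})) borel ((\<lambda>x. x t $ i) \<circ> (\<lambda>\<omega>. restrict (\<lambda>s. \<zeta> s \<omega>) {t}))"
    by (rule indep_var_compose[OF ind2 Fy_meas[OF t] g2])
  moreover have "(Fy t i \<circ> (\<lambda>\<omega>. restrict (\<lambda>s. \<zeta> s \<omega>) {1..t - 1})) = (\<lambda>\<omega>. grad (Wo \<omega> t) $ i / agdp.U grad (\<lambda>s. \<zeta> s \<omega>) w1 \<delta> \<alpha> \<beta>1 \<beta>2 t $ i)"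
    using Fy_eq t by (auto simp: fun_eq_iff)
  moreover have "((\<lambda>x. x t $ i) \<circ> (\<lambda>\<omega>. restrict (\<lambda>s. \<zeta> s \<omega>) {t})) = (\<lambda>\<omega>. \<zeta> t \<omega> $ i)"
    by (auto simp: fun_eq_iff)
  ultimately show ?thesis by simp
qed


lemma EZ: assumes t: "t \<in> {1..T}" shows "integral\<^sup>L M (\<lambda>\<omega>. Zo \<omega> t) = 0"
proof -
  have t1: "t \<ge> 1" and tT: "t \<le> T" using t by auto
  define c where "c = agdp.ah \<alpha> \<beta>1 \<beta>2 t * (1 - agdp.a \<beta>1 t)"
  define Y where "Y i \<omega> = grad (Wo \<omega> t) $ i / agdp.U grad (\<lambda>s. \<zeta> s \<omega>) w1 \<delta> \<alpha> \<beta>1 \<beta>2 t $ i" for i \<omega>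
  have Zeq: "Zo \<omega> t = (\<Sum>i\<in>UNIV. c * (Y i \<omega> * \<zeta> t \<omega> $ i))" for \<omega>
    unfolding Zo_def agdp.Z_def c_def Y_def Wo_def by (rule sum.cong) (simp_all add: field_simps)
  have zm: "\<zeta> t \<in> borel_measurable M" using meas t by simp
  have zint: "integrable M (\<zeta> t)"
  proof (rule integrable_const_bound)
    show "AE x in M. norm (\<zeta> t x) \<le> real CARD('n) * (2 * G)"
      using agdq.zeta_bound[OF Q t] by (intro AE_I2) simp
  qed (rule zm)
  have Ez: "integral\<^sup>L M (\<lambda>\<omega>. \<zeta> t \<omega> $ i) = 0" for i
    using integral_bounded_linear[OF bounded_linear_vec_nth zint, of i] mean0[OF t] by simp
  have zi: "integrable M (\<lambda>\<omega>. \<zeta> t \<omega> $ i)" for i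
    using integrable_bounded_linear[OF bounded_linear_vec_nth zint] by simp
  have Ym: "Y i \<in> borel_measurable M" for i
  proof -
    have g: "(\<lambda>\<omega>. grad (Wo \<omega> t)) \<in> borel_measurable M" using measurable_compose[OF Wo_meas[OF tT] gm] .
    note [measurable] = g U_meas[OF tT]
    show ?thesis unfolding Y_def[abs_def] by measurable
  qed
  have Yi: "integrable M (Y i)" for i
  proof (rule integrable_const_bound)
    show "AE x in M. norm (Y i x) \<le> G / (\<delta> * sqrt (1 - \<beta>2))"
    proof (intro AE_I2)
      fix \<omega> assume \<omega>: "\<omega> \<in> space M"
      note q = Q[OF \<omega>]
      have u0: "agdp.U grad (\<lambda>s. \<zeta> s \<omega>) w1 \<delta> \<alpha> \<beta>1 \<beta>2 t $ i \<ge> \<delta> * sqrt (1 - \<beta>2)"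
        by (rule agdq.U_lower[OF q t1])
      have lp: "\<delta> * sqrt (1 - \<beta>2) > 0" by (rule agdq.lowpos[OF q])
      have gg: "\<bar>grad (Wo \<omega> t) $ i\<bar> \<le> G" unfolding Wo_def by (rule agdq.comp_grad[OF q t])
      have "\<bar>grad (Wo \<omega> t) $ i\<bar> / agdp.U grad (\<lambda>s. \<zeta> s \<omega>) w1 \<delta> \<alpha> \<beta>1 \<beta>2 t $ i \<le> G / (\<delta> * sqrt (1 - \<beta>2))"
        by (rule frac_le[OF _ gg lp u0]) (use Gd \<delta> in auto)
      then show "norm (Y i \<omega>) \<le> G / (\<delta> * sqrt (1 - \<beta>2))" using u0 lp by (simp add: Y_def)
    qed
  qed (rule Ym)
  have EY: "integral\<^sup>L M (\<lambda>\<omega>. Y i \<omega> * \<zeta> t \<omega> $ i) = 0" for i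
  proof -
    have ind: "indep_var borel (Y i) borel (\<lambda>\<omega>. \<zeta> t \<omega> $ i)" unfolding Y_def[abs_def] by (rule indep_Y[OF t])
    show ?thesis using indep_var_lebesgue_integral[OF ind Yi zi] Ez by simp
  qed
  have YZi: "integrable M (\<lambda>\<omega>. c * (Y i \<omega> * \<zeta> t \<omega> $ i))" for i
  proof -
    have ind: "indep_var borel (Y i) borel (\<lambda>\<omega>. \<zeta> t \<omega> $ i)" unfolding Y_def[abs_def] by (rule indep_Y[OF t])
    show ?thesis using indep_var_integrable[OF ind Yi zi] by simp
  qed
  have "integral\<^sup>L M (\<lambda>\<omega>. Zo \<omega> t) = integral\<^sup>L M (\<lambda>\<omega>. \<Sum>i\<in>UNIV. c * (Y i \<omega> * \<zeta> t \<omega> $ i))"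
    by (simp add: Zeq)
  also have "\<dots> = (\<Sum>i\<in>UNIV. integral\<^sup>L M (\<lambda>\<omega>. c * (Y i \<omega> * \<zeta> t \<omega> $ i)))"
    by (rule Bochner_Integration.integral_sum[where f="\<lambda>i \<omega>. c * (Y i \<omega> * \<zeta> t \<omega> $ i)"]) (rule YZi)
  also have "\<dots> = 0" using EY by simp
  finally show ?thesis .
qed


lemma n2_int: assumes t: "t \<in> {1..T}" shows "integrable M (\<lambda>\<omega>. (norm (grad (Wo \<omega> t)))\<^sup>2)"
proof (rule integrable_const_bound)
  show "AE x in M. norm ((norm (grad (Wo x t)))\<^sup>2) \<le> real CARD('n) * G\<^sup>2"
    using agdq.gradnorm_bound[OF Q t] by (intro AE_I2) (simp add: Wo_def)
qed (use t in simp)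

lemma Z_int: assumes t: "t \<in> {1..T}" shows "integrable M (\<lambda>\<omega>. Zo \<omega> t)"
proof (rule integrable_const_bound)
  show "AE x in M. norm (Zo x t) \<le> real CARD('n) * (\<alpha> / (1 - \<beta>1) * (2 * G\<^sup>2) / (\<delta> * sqrt (1 - \<beta>2)))"
    using agdq.Z_bound[OF Q t] by (intro AE_I2) (simp add: Zo_def)
qed (use t Zo_meas in simp)

lemma int_ineq: "Ac0 * (\<Sum>t=1..T. integral\<^sup>L M (\<lambda>\<omega>. (norm (grad (Wo \<omega> t)))\<^sup>2) / sqrt (real t)) \<le> R0"
proof -
  have i1: "integrable M (\<lambda>\<omega>. Ac0 * (\<Sum>t=1..T. (norm (grad (Wo \<omega> t)))\<^sup>2 / sqrt (real t)))"
    using n2_int by (intro integrable_mult_right integrable_sum integrable_divide) auto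
  have i2: "integrable M (\<lambda>\<omega>. R0 - (\<Sum>t=1..T. Zo \<omega> t))"
    using Z_int by (intro Bochner_Integration.integrable_diff integrable_sum) auto
  have "integral\<^sup>L M (\<lambda>\<omega>. Ac0 * (\<Sum>t=1..T. (norm (grad (Wo \<omega> t)))\<^sup>2 / sqrt (real t)))
      \<le> integral\<^sup>L M (\<lambda>\<omega>. R0 - (\<Sum>t=1..T. Zo \<omega> t))"
    by (rule integral_mono[OF i1 i2]) (rule pw)
  also have "integral\<^sup>L M (\<lambda>\<omega>. R0 - (\<Sum>t=1..T. Zo \<omega> t)) = R0 - (\<Sum>t=1..T. integral\<^sup>L M (\<lambda>\<omega>. Zo \<omega> t))"
    using Z_int prob_space by (subst Bochner_Integration.integral_diff) (auto intro!: integrable_sum simp: Bochner_Integration.integral_sum)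
  also have "\<dots> = R0" using EZ by simp
  also have "integral\<^sup>L M (\<lambda>\<omega>. Ac0 * (\<Sum>t=1..T. (norm (grad (Wo \<omega> t)))\<^sup>2 / sqrt (real t)))
      = Ac0 * (\<Sum>t=1..T. integral\<^sup>L M (\<lambda>\<omega>. (norm (grad (Wo \<omega> t)))\<^sup>2) / sqrt (real t))"
    using n2_int by (simp add: Bochner_Integration.integral_sum integrable_divide)
  finally show ?thesis .
qed

end



lemma arith2:
  fixes \<Delta> N G \<delta> \<alpha> b1 L l u s :: real
  assumes D: "\<Delta> \<ge> 0" and N: "N \<ge> 0" and G: "G > 0" and \<delta>: "\<delta> > 0" and \<alpha>: "\<alpha> > 0"
    and b1: "0 \<le> b1" "b1 \<le> 1" and L: "L \<ge> 0" and l: "l \<ge> 0"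
    and u: "0 < u" "u \<le> 1" and s: "0 < s" "s \<le> 1"
  shows "(\<Delta> + 2 * \<alpha> * G\<^sup>2 / u * (N / (\<delta> * s))
          + N * (\<alpha> * b1 * G\<^sup>2 / (u * (\<delta> * s)) + L / 2 * (\<alpha>\<^sup>2 * G\<^sup>2 / (u\<^sup>2 * \<delta>\<^sup>2 * s\<^sup>2))) * (l + 1))
        / (2 * (\<alpha> * s * u\<^sup>2 / (2 * G)))
    \<le> G / (\<alpha> * u\<^sup>2 * (s\<^sup>2)\<^sup>2) * (\<Delta> + N * G\<^sup>2 * \<alpha> / (u ^ 8 * \<delta>\<^sup>2) * (\<delta> + 8 * L * \<alpha>) + \<alpha> * b1 * N * G\<^sup>2 / (u ^ 3 * \<delta>))
     + 15 * L * N * G ^ 3 * \<alpha> / (2 * (s\<^sup>2)\<^sup>2 * u ^ 10 * \<delta>\<^sup>2) * l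
     + N * G ^ 3 / (\<alpha> * u ^ 5 * (s\<^sup>2)\<^sup>2 * \<delta>) * \<alpha> / u * (l + 1)"
proof -
  define P where "P = N * G ^ 3 / \<delta>"
  define Q where "Q = L * N * \<alpha> * G ^ 3 / \<delta>\<^sup>2"
  have P0: "P \<ge> 0" and Q0: "Q \<ge> 0" using N G \<delta> L \<alpha> by (simp_all add: P_def Q_def)
  define X where "X = P / (u ^ 3 * s\<^sup>2)"
  define Y where "Y = Q / (2 * u ^ 4 * s ^ 3)"
  have lhs: "(\<Delta> + 2 * \<alpha> * G\<^sup>2 / u * (N / (\<delta> * s))
          + N * (\<alpha> * b1 * G\<^sup>2 / (u * (\<delta> * s)) + L / 2 * (\<alpha>\<^sup>2 * G\<^sup>2 / (u\<^sup>2 * \<delta>\<^sup>2 * s\<^sup>2))) * (l + 1))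
        / (2 * (\<alpha> * s * u\<^sup>2 / (2 * G))) = G * \<Delta> / (\<alpha> * s * u\<^sup>2) + 2 * X + (b1 * X + Y) * (l + 1)"
    using G \<delta> \<alpha> u s unfolding X_def Y_def P_def Q_def
    by (simp add: field_simps power2_eq_square power3_eq_cube eval_nat_numeral)
  define X1 where "X1 = P / (u ^ 10 * s ^ 4)"
  define Y1 where "Y1 = 8 * Q / (u ^ 10 * s ^ 4)"
  define X2 where "X2 = b1 * P / (u ^ 5 * s ^ 4)"
  define Y2 where "Y2 = 15 * Q / (2 * u ^ 10 * s ^ 4)"
  define X3 where "X3 = P / (u ^ 6 * s ^ 4)"
  have rhs: "G / (\<alpha> * u\<^sup>2 * (s\<^sup>2)\<^sup>2) * (\<Delta> + N * G\<^sup>2 * \<alpha> / (u ^ 8 * \<delta>\<^sup>2) * (\<delta> + 8 * L * \<alpha>) + \<alpha> * b1 * N * G\<^sup>2 / (u ^ 3 * \<delta>))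
     + 15 * L * N * G ^ 3 * \<alpha> / (2 * (s\<^sup>2)\<^sup>2 * u ^ 10 * \<delta>\<^sup>2) * l
     + N * G ^ 3 / (\<alpha> * u ^ 5 * (s\<^sup>2)\<^sup>2 * \<delta>) * \<alpha> / u * (l + 1)
     = G * \<Delta> / (\<alpha> * u\<^sup>2 * s ^ 4) + X1 + Y1 + X2 + Y2 * l + X3 * (l + 1)"
    using G \<delta> \<alpha> u s unfolding X1_def Y1_def X2_def Y2_def X3_def P_def Q_def
    by (simp add: field_simps power2_eq_square power3_eq_cube eval_nat_numeral)
  have pu: "u ^ 10 \<le> u ^ 3" "u ^ 10 \<le> u ^ 4" "u ^ 6 \<le> u ^ 3" "u ^ 5 \<le> u ^ 3"
    using u by (simp_all add: power_decreasing)
  have ps: "s ^ 4 \<le> s\<^sup>2" "s ^ 4 \<le> s ^ 3" "s ^ 4 \<le> s"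
    using s power_decreasing[of 1 4 s] by (simp_all add: power_decreasing)
  have pos: "0 < u ^ 10" "0 < s ^ 4" "0 < u ^ 3" "0 < s ^ 2" "0 < u ^ 5" "0 < u ^ 6" "0 < u ^ 4" "0 < s ^ 3"
    using u s by simp_all
  have "u ^ 10 * s ^ 4 \<le> u ^ 3 * s\<^sup>2" using pu ps pos by (intro mult_mono) auto
  then have XX1: "X \<le> X1" unfolding X_def X1_def using P0 pos by (intro divide_left_mono) auto
  have "u ^ 6 * s ^ 4 \<le> u ^ 3 * s\<^sup>2" using pu ps pos by (intro mult_mono) auto
  then have XX3: "X \<le> X3" unfolding X_def X3_def using P0 pos by (intro divide_left_mono) auto
  have "u ^ 5 * s ^ 4 \<le> u ^ 3 * s\<^sup>2" using pu ps pos by (intro mult_mono) auto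
  then have "P / (u ^ 3 * s\<^sup>2) \<le> P / (u ^ 5 * s ^ 4)" using P0 pos by (intro divide_left_mono) auto
  then have "b1 * (P / (u ^ 3 * s\<^sup>2)) \<le> b1 * (P / (u ^ 5 * s ^ 4))" using b1(1) by (rule mult_left_mono)
  then have XX2: "b1 * X \<le> X2" unfolding X_def X2_def by simp
  have "u ^ 10 * s ^ 4 \<le> u ^ 4 * s ^ 3" using pu ps pos by (intro mult_mono) auto
  moreover have "0 \<le> u ^ 4 * s ^ 3" using pos by simp
  moreover have "2 * u ^ 4 * s ^ 3 = 2 * (u ^ 4 * s ^ 3)" by simp
  ultimately have "u ^ 10 * s ^ 4 \<le> 2 * u ^ 4 * s ^ 3" by linarith
  then have YQ: "Y \<le> Q / (u ^ 10 * s ^ 4)" unfolding Y_def using Q0 pos by (intro divide_left_mono) auto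
  have "Q / (u ^ 10 * s ^ 4) \<le> 8 * Q / (u ^ 10 * s ^ 4)" using Q0 pos by (intro divide_right_mono) auto
  then have YY1: "Y \<le> Y1" using YQ unfolding Y1_def by linarith
  have "Q / (u ^ 10 * s ^ 4) \<le> 15 * Q / (2 * u ^ 10 * s ^ 4)" using Q0 pos by (simp add: field_simps)
  then have YY2: "Y \<le> Y2" using YQ unfolding Y2_def by linarith
  have X0: "X \<ge> 0" using P0 pos unfolding X_def by simp
  have D1: "G * \<Delta> / (\<alpha> * s * u\<^sup>2) \<le> G * \<Delta> / (\<alpha> * u\<^sup>2 * s ^ 4)"
    using ps pos D G \<alpha> u by (intro divide_left_mono) (auto simp: mult.commute mult.left_commute mult_left_mono)
  have a1: "b1 * X * l \<le> X3 * l" using XX3 X0 b1 l by (intro mult_right_mono) (auto simp: mult_le_cancel_right1 order_trans[OF mult_left_le_one_le])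
  have a2: "Y * l \<le> Y2 * l" using YY2 l by (rule mult_right_mono)
  show ?thesis unfolding lhs rhs using D1 XX1 XX2 XX3 YY1 a1 a2 by (simp add: algebra_simps)
qed


lemma sqrt_sum: "(\<Sum>t=1..n. 1 / sqrt (real t)) \<ge> 2 * sqrt (real n + 1) - 2"
proof (induction n)
  case 0 then show ?case by simp
next
  case (Suc n)
  define x where "x = sqrt (real n + 1)"
  define y where "y = sqrt (real n + 2)"
  have x0: "x > 0" unfolding x_def by simp
  have y0: "y \<ge> 0" unfolding y_def by simp
  have xx: "x\<^sup>2 = real n + 1" unfolding x_def by simp
  have yy: "y\<^sup>2 = real n + 2" unfolding y_def by simp
  have "(x - y)\<^sup>2 \<ge> 0" by simp
  then have "2 * x * y \<le> x\<^sup>2 + y\<^sup>2" unfolding power2_diff by linarith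
  then have "2 * x * y - 2 * x\<^sup>2 \<le> 1" using xx yy by simp
  then have "x * (2 * y - 2 * x) \<le> 1" by (simp add: algebra_simps power2_eq_square)
  then have "2 * y - 2 * x \<le> 1 / x" using x0 by (simp add: field_simps)
  moreover have "sqrt (real (Suc n)) = x" unfolding x_def by (simp add: add.commute)
  moreover have "sqrt (real (Suc n) + 1) = y" unfolding y_def by (simp add: add.commute)
  moreover have e: "sqrt (1 + real n) = sqrt (real n + 1)" by (simp add: add.commute)
  ultimately show ?case using Suc by (simp add: x_def e)
qed

lemma div3: "a * (1 / D) + b * (c / D) + e * (c' / D) = (a + b * c + e * c') / (D :: real)"
  by (simp add: add_divide_distrib)

context agdm
begin

lemma main:
  "Min ((\<lambda>t. integral\<^sup>L M (\<lambda>\<omega>. (norm (grad (agd_w grad (\<lambda>t. \<beta>1 / sqrt (real t)) \<beta>2 \<delta>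
                 (\<lambda>t. \<alpha> / sqrt (real t)) w1 (\<lambda>s. \<zeta> s \<omega>) t)))\<^sup>2)) ` {1..T})
     < (G / (\<alpha> * (1 - \<beta>1)\<^sup>2 * (1 - \<beta>2)\<^sup>2)
          * (f w1 - f wstar
             + real CARD('n) * G\<^sup>2 * \<alpha> / ((1 - \<beta>1) ^ 8 * \<delta>\<^sup>2) * (\<delta> + 8 * L * \<alpha>)
             + \<alpha> * \<beta>1 * real CARD('n) * G\<^sup>2 / ((1 - \<beta>1) ^ 3 * \<delta>)))
        * (1 / (sqrt (real T) - sqrt 2))
     + (15 * L * real CARD('n) * G ^ 3 * \<alpha> / (2 * (1 - \<beta>2)\<^sup>2 * (1 - \<beta>1) ^ 10 * \<delta>\<^sup>2))
        * (ln (real T) / (sqrt (real T) - sqrt 2))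
     + (real CARD('n) * G ^ 3 / (\<alpha> * (1 - \<beta>1) ^ 5 * (1 - \<beta>2)\<^sup>2 * \<delta>)) * \<alpha> / (1 - \<beta>1)
        * ((ln (real T) + 1) / (sqrt (real T) - sqrt 2))"
  (is "?m < ?rhs")
proof -
  define E where "E t = integral\<^sup>L M (\<lambda>\<omega>. (norm (grad (Wo \<omega> t)))\<^sup>2)" for t
  have mE: "?m = Min (E ` {1..T})"
    unfolding E_def Wo_def link_W by simp
  define m where "m = Min (E ` {1..T})"
  define S where "S = (\<Sum>t=1..T. 1 / sqrt (real t))"
  define D where "D = sqrt (real T) - sqrt 2"
  have T3: "real T \<ge> 3" using T by simp
  have D0: "D > 0" unfolding D_def using T3 by simp
  have S2: "S > 2 * D"
  proof -
    have "S \<ge> 2 * sqrt (real T + 1) - 2" unfolding S_def by (rule sqrt_sum)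
    moreover have "sqrt (real T + 1) > sqrt (real T)" by simp
    moreover have "sqrt 2 > 1" by simp
    moreover have "2 * D = 2 * sqrt (real T) - 2 * sqrt 2" by (simp add: D_def algebra_simps)
    ultimately show ?thesis by linarith
  qed
  have mle: "m \<le> E t" if "t \<in> {1..T}" for t
    unfolding m_def using that by (intro Min_le) auto
  have "m * S = (\<Sum>t=1..T. m / sqrt (real t))" unfolding S_def by (simp add: sum_distrib_left)
  also have "\<dots> \<le> (\<Sum>t=1..T. E t / sqrt (real t))"
    by (rule sum_mono) (use mle in \<open>auto intro: divide_right_mono\<close>)
  finally have mS: "m * S \<le> (\<Sum>t=1..T. E t / sqrt (real t))" .
  have Ac0: "Ac0 > 0" unfolding Ac0_def using \<alpha> \<beta>1 \<beta>2 \<delta> Gd by simp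
  have "Ac0 * (m * S) \<le> R0" using int_ineq mS Ac0 unfolding E_def
    by (meson mult_left_mono less_imp_le order_trans)
  then have m1: "m \<le> R0 / (Ac0 * S)" using Ac0 S2 D0 by (simp add: field_simps)
  have L0': "L \<ge> 0" by (rule L0)
  have R0: "R0 > 0"
  proof -
    have a: "f w1 - f wstar \<ge> 0" using opt[of w1] by simp
    have b: "2 * \<alpha> * G\<^sup>2 / (1 - \<beta>1) * (real CARD('n) / (\<delta> * sqrt (1 - \<beta>2))) > 0"
      using \<alpha> \<beta>1 \<beta>2 \<delta> Gd by simp
    have lnT: "ln (real T) \<ge> 0" using T3 by simp
    have c: "real CARD('n) * (\<alpha> * \<beta>1 * G\<^sup>2 / ((1 - \<beta>1) * (\<delta> * sqrt (1 - \<beta>2)))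
        + L / 2 * (\<alpha>\<^sup>2 * G\<^sup>2 / ((1 - \<beta>1)\<^sup>2 * \<delta>\<^sup>2 * (1 - \<beta>2)))) * (ln (real T) + 1) \<ge> 0"
      using \<alpha> \<beta>1 \<beta>2 \<delta> Gd L0' lnT by simp
    show ?thesis unfolding R0_def using a b c by linarith
  qed
  have m2: "R0 / (Ac0 * S) < R0 / (Ac0 * (2 * D))"
    by (rule divide_strict_left_mono) (use R0 Ac0 S2 D0 in auto)
  have m3: "R0 / (Ac0 * (2 * D)) = (R0 / (2 * Ac0)) / D" by (simp add: field_simps)
  have ar: "R0 / (2 * Ac0) \<le> G / (\<alpha> * (1 - \<beta>1)\<^sup>2 * (1 - \<beta>2)\<^sup>2)
          * (f w1 - f wstar
             + real CARD('n) * G\<^sup>2 * \<alpha> / ((1 - \<beta>1) ^ 8 * \<delta>\<^sup>2) * (\<delta> + 8 * L * \<alpha>)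
             + \<alpha> * \<beta>1 * real CARD('n) * G\<^sup>2 / ((1 - \<beta>1) ^ 3 * \<delta>))
     + 15 * L * real CARD('n) * G ^ 3 * \<alpha> / (2 * (1 - \<beta>2)\<^sup>2 * (1 - \<beta>1) ^ 10 * \<delta>\<^sup>2) * ln (real T)
     + real CARD('n) * G ^ 3 / (\<alpha> * (1 - \<beta>1) ^ 5 * (1 - \<beta>2)\<^sup>2 * \<delta>) * \<alpha> / (1 - \<beta>1) * (ln (real T) + 1)"
  proof -
    have s2: "(sqrt (1 - \<beta>2))\<^sup>2 = 1 - \<beta>2" using \<beta>2 by simp
    have "f w1 - f wstar \<ge> 0" using opt[of w1] by simp
    from arith2[OF this _ _ \<delta> \<alpha> \<beta>1(1) _ L0', of "real CARD('n)" G "ln (real T)" "1 - \<beta>1" "sqrt (1 - \<beta>2)"]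
    show ?thesis unfolding R0_def Ac0_def s2 using \<delta> Gd \<beta>1 \<beta>2 T3 by simp
  qed
  have "R0 / (2 * Ac0) / D \<le> ?rhs"
    unfolding div3 D_def[symmetric] using divide_right_mono[OF ar, of D] D0 by simp
  then show ?thesis unfolding mE m_def[symmetric] using m1 m2 m3 by linarith
qed

end



theorem corollary1:
  fixes f :: "real ^ 'n \<Rightarrow> real" and grad :: "real ^ 'n \<Rightarrow> real ^ 'n"
    and M :: "'a measure" and \<zeta> :: "nat \<Rightarrow> 'a \<Rightarrow> real ^ 'n"
    and wstar w1 :: "real ^ 'n"
    and L G \<delta> \<alpha> \<beta>1 \<beta>2 :: real and T :: nat
  assumes P: "prob_space M"
    and diff: "\<And>x. (f has_derivative (\<lambda>h. grad x \<bullet> h)) (at x)"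
    and opt: "\<And>w. f wstar \<le> f w"
    and smooth: "\<And>x y. norm (grad x - grad y) \<le> L * norm (x - y)"
    and \<delta>: "\<delta> > 0" and \<alpha>: "\<alpha> > 0"
    and \<beta>1: "0 \<le> \<beta>1" "\<beta>1 < 1" and \<beta>2: "0 \<le> \<beta>2" "\<beta>2 < 1"
    and T: "T \<ge> 3"
    and Gd: "G \<ge> \<delta>"
    and meas: "\<And>t. t \<in> {1..T} \<Longrightarrow> \<zeta> t \<in> borel_measurable M"
    and indep: "prob_space.indep_vars M (\<lambda>_. borel) \<zeta> {1..T}"
    and mean0: "\<And>t. t \<in> {1..T} \<Longrightarrow> integral\<^sup>L M (\<zeta> t) = 0"
    and gbound: "\<And>t \<omega>. t \<in> {1..T} \<Longrightarrow> \<omega> \<in> space M \<Longrightarrow>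
       linf (agd_g grad (\<lambda>t. \<beta>1 / sqrt (real t)) \<beta>2 \<delta> (\<lambda>t. \<alpha> / sqrt (real t)) w1
               (\<lambda>s. \<zeta> s \<omega>) t) \<le> G"
    and gradbound: "\<And>t \<omega>. t \<in> {1..T} \<Longrightarrow> \<omega> \<in> space M \<Longrightarrow>
       linf (grad (agd_w grad (\<lambda>t. \<beta>1 / sqrt (real t)) \<beta>2 \<delta> (\<lambda>t. \<alpha> / sqrt (real t)) w1
               (\<lambda>s. \<zeta> s \<omega>) t)) \<le> G"
    and bmono: "\<And>t i \<omega>. t \<ge> 1 \<Longrightarrow> \<omega> \<in> space M \<Longrightarrow>
       agd_b grad (\<lambda>t. \<beta>1 / sqrt (real t)) \<beta>2 \<delta> (\<lambda>t. \<alpha> / sqrt (real t)) w1 (\<lambda>s. \<zeta> s \<omega>) t $ i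
       \<le> agd_b grad (\<lambda>t. \<beta>1 / sqrt (real t)) \<beta>2 \<delta> (\<lambda>t. \<alpha> / sqrt (real t)) w1 (\<lambda>s. \<zeta> s \<omega>) (t + 1) $ i"
  shows "Min ((\<lambda>t. integral\<^sup>L M (\<lambda>\<omega>. (norm (grad (agd_w grad (\<lambda>t. \<beta>1 / sqrt (real t)) \<beta>2 \<delta>
                 (\<lambda>t. \<alpha> / sqrt (real t)) w1 (\<lambda>s. \<zeta> s \<omega>) t)))\<^sup>2)) ` {1..T})
     < (G / (\<alpha> * (1 - \<beta>1)\<^sup>2 * (1 - \<beta>2)\<^sup>2)
          * (f w1 - f wstar
             + real CARD('n) * G\<^sup>2 * \<alpha> / ((1 - \<beta>1) ^ 8 * \<delta>\<^sup>2) * (\<delta> + 8 * L * \<alpha>)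
             + \<alpha> * \<beta>1 * real CARD('n) * G\<^sup>2 / ((1 - \<beta>1) ^ 3 * \<delta>)))
        * (1 / (sqrt (real T) - sqrt 2))
     + (15 * L * real CARD('n) * G ^ 3 * \<alpha> / (2 * (1 - \<beta>2)\<^sup>2 * (1 - \<beta>1) ^ 10 * \<delta>\<^sup>2))
        * (ln (real T) / (sqrt (real T) - sqrt 2))
     + (real CARD('n) * G ^ 3 / (\<alpha> * (1 - \<beta>1) ^ 5 * (1 - \<beta>2)\<^sup>2 * \<delta>)) * \<alpha> / (1 - \<beta>1)
        * ((ln (real T) + 1) / (sqrt (real T) - sqrt 2))"
proof -
  interpret agdm f grad M \<zeta> wstar w1 L G \<delta> \<alpha> \<beta>1 \<beta>2 T
    by (rule agdm.intro) (fact P diff opt smooth \<delta> \<alpha> \<beta>1 \<beta>2 T Gd meas indep mean0 gbound gradbound bmono)+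
  show ?thesis by (rule main)
qed

end
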